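(* Let $\mathcal{H}=L^2(\mathcal{Z})$ and let $$X_i=\mu+\Delta_n\,g\!\left(\tfrac in\right)+\varepsilon_i,\qquad i=1,\ldots,n,$$ where $\mu,\Delta_n\in\mathcal{H}$. Assume that $g:[0,1]\to\mathbb{R}$ is non-constant, bounded, Riemann integrable and piecewise continuous, with $g(0)=0$; piecewise continuity means that $[0,1]$ can be partitioned into finitely many intervals of positive length on each of which $g$ is continuous. Assume the errors satisfy the following two conditions. (A1) $\{\varepsilon_i\}_{i\in\mathbb{Z}}$ is a centered, strictly stationary sequence of $\mathcal{H}$-valued random variables with $\mathsf{E}\|\varepsilon_1\|^k<\infty$ for some $k>2$. With $C_r=\mathsf{E}[\varepsilon_0\otimes\varepsilon_r]$ one has $\sum_{r}\|C_r\|<\infty$, and $C_\varepsilon=\sum_rC_r\neq0$. Write $C_\varepsilon=\sum_{p\ge1}\lambda_{p,\varepsilon}v_{p,\varepsilon}\otimes v_{p,\varepsilon}$ with non-increasing eigenvalues and orthonormal basis $\{v_{p,\varepsilon}\}$. Moreover $\sum_{p\ge1}\sum_{h\in\mathbb{Z}}|\mathsf{Cov}(\langle\varepsilon_0,v_{p,\varepsilon}\rangle,\langle\varepsilon_h,v_{p,\varepsilon}\rangle)|<\infty$. (A2) $\{n^{-1/2}\sum_{i=1}^{\lfloor tn\rfloor}\varepsilon_i\}_{t\in[0,1]}$ converges weakly in $D^{\mathcal{H}}[0,1]$ to an $\mathcal{H}$-valued Brownian motion with covariance operator $C_\varepsilon$. Let $\hat C_n$ be a random bounded self-adjoint positive semidefinite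 operator computed from $X_1,\ldots,X_n$, with largest eigenvalue $\hat\lambda_{1,n}$, and let $$T_{n,\mathrm{WF}}(\hat C_n)=\max_{1\le k<n}\Big\|(\hat C_n+\hat\lambda_{1,n}\mathrm{Id})^{-1/2}\frac{1}{\sqrt n}\sum_{i=1}^k(X_i-\bar X_n)\Big\|.$$ If $\|\hat C_n\|=o_P(n\|\Delta_n\|^2)$ and $\sqrt n\|\Delta_n\|\to\infty$, then $T_{n,\mathrm{WF}}(\hat C_n)\to\infty$ in probability as $n\to\infty$.
   Context: $\mathcal{H}=L^2(\mathcal{Z})$ is the real separable Hilbert space of square-integrable functions on a domain $\mathcal{Z}$ with a $\sigma$-finite measure $\nu$, with inner product $\langle f,g\rangle=\int fg\,d\nu$ and norm $\|\cdot\|$. The tensor product is $(v\otimes w)(h)=\langle v,h\rangle w$. $\|\cdot\|$ on operators is the operator norm. $\bar X_n=n^{-1}\sum_{i=1}^nX_i$. For a positive definite bounded self-adjoint operator $A$, $A^{-1/2}$ is its unique positive definite inverse square root. *)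

theory Defs
  imports "HOL-Probability.Probability"
begin

definition tensor :: "'h::real_inner \<Rightarrow> 'h \<Rightarrow> ('h \<Rightarrow>\<^sub>L 'h)" where
  "tensor v w = Blinfun (\<lambda>h. (v \<bullet> h) *\<^sub>R w)"

definition self_adjoint_op :: "('h::real_inner \<Rightarrow>\<^sub>L 'h) \<Rightarrow> bool" where
  "self_adjoint_op A \<longleftrightarrow> (\<forall>x y. blinfun_apply A x \<bullet> y = x \<bullet> blinfun_apply A y)"

definition psd_op :: "('h::real_inner \<Rightarrow>\<^sub>L 'h) \<Rightarrow> bool" where
  "psd_op A \<longleftrightarrow> self_adjoint_op A \<and> (\<forall>x. blinfun_apply A x \<bullet> x \<ge> 0)"

definition pd_op :: "('h::real_inner \<Rightarrow>\<^sub>L 'h) \<Rightarrow> bool" where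
  "pd_op A \<longleftrightarrow> self_adjoint_op A \<and> (\<forall>x. x \<noteq> 0 \<longrightarrow> blinfun_apply A x \<bullet> x > 0)"

definition is_eigenvalue :: "('h::real_inner \<Rightarrow>\<^sub>L 'h) \<Rightarrow> real \<Rightarrow> bool" where
  "is_eigenvalue A l \<longleftrightarrow> (\<exists>x. x \<noteq> 0 \<and> blinfun_apply A x = l *\<^sub>R x)"

definition is_largest_eigenvalue :: "('h::real_inner \<Rightarrow>\<^sub>L 'h) \<Rightarrow> real \<Rightarrow> bool" where
  "is_largest_eigenvalue A l \<longleftrightarrow> is_eigenvalue A l \<and> (\<forall>m. is_eigenvalue A m \<longrightarrow> m \<le> l)"

definition inv_sqrt_op :: "('h::real_inner \<Rightarrow>\<^sub>L 'h) \<Rightarrow> ('h \<Rightarrow>\<^sub>L 'h)" where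
  "inv_sqrt_op A = (THE B. pd_op B \<and> B o\<^sub>L B o\<^sub>L A = id_blinfun \<and> A o\<^sub>L B o\<^sub>L B = id_blinfun)"

definition T_WF :: "nat \<Rightarrow> (nat \<Rightarrow> 'h::real_inner) \<Rightarrow> ('h \<Rightarrow>\<^sub>L 'h) \<Rightarrow> real \<Rightarrow> real" where
  "T_WF n X A l =
     (let Xbar = (1 / real n) *\<^sub>R (\<Sum>i=1..n. X i)
      in Max ((\<lambda>k. norm (blinfun_apply (inv_sqrt_op (A + l *\<^sub>R id_blinfun))
                   ((1 / sqrt (real n)) *\<^sub>R (\<Sum>i=1..k. X i - Xbar)))) ` {1..<n}))"

definition outer_prob :: "'a measure \<Rightarrow> 'a set \<Rightarrow> real" where
  "outer_prob M A = Inf {measure M B | B. B \<in> sets M \<and> A \<subseteq> B}"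

definition strictly_stationary :: "'a measure \<Rightarrow> (int \<Rightarrow> 'a \<Rightarrow> 'h::topological_space) \<Rightarrow> bool" where
  "strictly_stationary M e \<longleftrightarrow>
     (\<forall>h::int. distr M (Pi\<^sub>M UNIV (\<lambda>_. borel)) (\<lambda>\<omega> t. e (t + h) \<omega>)
             = distr M (Pi\<^sub>M UNIV (\<lambda>_. borel)) (\<lambda>\<omega> t. e t \<omega>))"

definition cov :: "'a measure \<Rightarrow> ('a \<Rightarrow> real) \<Rightarrow> ('a \<Rightarrow> real) \<Rightarrow> real" where
  "cov M U V = (\<integral>\<omega>. U \<omega> * V \<omega> \<partial>M) - (\<integral>\<omega>. U \<omega> \<partial>M) * (\<integral>\<omega>. V \<omega> \<partial>M)"

text \<open>H-valued Brownian motion on [0,1] with covariance operator C: a centred Gaussian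
  process with continuous paths and covariance  E <W s,x><W t,y> = min s t <C x, y>,
  characterised through its finite-dimensional characteristic functionals.\<close>
definition brownian_motion :: "'w measure \<Rightarrow> (real \<Rightarrow> 'w \<Rightarrow> 'h::real_inner) \<Rightarrow> ('h \<Rightarrow>\<^sub>L 'h) \<Rightarrow> bool" where
  "brownian_motion N W C \<longleftrightarrow> prob_space N \<and>
     (\<forall>t. W t \<in> borel_measurable N) \<and>
     (\<forall>\<omega>\<in>space N. continuous_on {0..1} (\<lambda>t. W t \<omega>)) \<and>
     (\<forall>(ts::real list) (xs::'h list). length ts = length xs \<and> set ts \<subseteq> {0..1} \<longrightarrow>
        (\<integral>\<omega>. cis (\<Sum>j<length ts. W (ts ! j) \<omega> \<bullet> xs ! j) \<partial>N)
          = complex_of_real (exp (- (1/2) * (\<Sum>j<length ts. \<Sum>l<length ts.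
                min (ts ! j) (ts ! l) * (blinfun_apply C (xs ! j) \<bullet> xs ! l)))))"

definition cadlag :: "(real \<Rightarrow> 'h::metric_space) \<Rightarrow> bool" where
  "cadlag x \<longleftrightarrow> (\<forall>t\<in>{0..<1}. continuous (at_right t) x) \<and>
                 (\<forall>t\<in>{0<..1}. \<exists>l. (x \<longlongrightarrow> l) (at_left t))"

definition time_changes :: "(real \<Rightarrow> real) set" where
  "time_changes = {\<tau>. strict_mono_on {0..1} \<tau> \<and> continuous_on {0..1} \<tau> \<and> \<tau> 0 = 0 \<and> \<tau> 1 = 1}"

definition skorokhod_dist :: "(real \<Rightarrow> 'h::real_normed_vector) \<Rightarrow> (real \<Rightarrow> 'h) \<Rightarrow> real" where
  "skorokhod_dist x y = (INF \<tau>\<in>time_changes.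
      max (SUP t\<in>{0..1}. \<bar>\<tau> t - t\<bar>) (SUP t\<in>{0..1}. norm (x t - y (\<tau> t))))"

definition bounded_continuous_on_D :: "((real \<Rightarrow> 'h::real_normed_vector) \<Rightarrow> real) \<Rightarrow> bool" where
  "bounded_continuous_on_D f \<longleftrightarrow>
     (\<exists>B. \<forall>x. cadlag x \<longrightarrow> \<bar>f x\<bar> \<le> B) \<and>
     (\<forall>x. cadlag x \<longrightarrow> (\<forall>e>0. \<exists>d>0. \<forall>y. cadlag y \<longrightarrow> skorokhod_dist x y < d \<longrightarrow> \<bar>f x - f y\<bar> < e))"

definition weak_conv_D :: "'a measure \<Rightarrow> (nat \<Rightarrow> 'a \<Rightarrow> real \<Rightarrow> 'h::real_normed_vector)
                             \<Rightarrow> 'w measure \<Rightarrow> ('w \<Rightarrow> real \<Rightarrow> 'h) \<Rightarrow> bool" where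
  "weak_conv_D M S N W \<longleftrightarrow>
     (\<forall>f. bounded_continuous_on_D f \<longrightarrow>
        (\<lambda>n. \<integral>\<omega>. f (S n \<omega>) \<partial>M) \<longlonglongrightarrow> (\<integral>\<omega>. f (W \<omega>) \<partial>N))"

definition piecewise_continuous_01 :: "(real \<Rightarrow> real) \<Rightarrow> bool" where
  "piecewise_continuous_01 g \<longleftrightarrow>
     (\<exists>Is. finite Is \<and> disjoint Is \<and> \<Union>Is = {0..1} \<and>
        (\<forall>I\<in>Is. is_interval I \<and> interior I \<noteq> {} \<and> continuous_on I g))"

end

theory Submission
  imports Defs "HOL-Computational_Algebra.Formal_Power_Series"
begin

lemma blinfun_Cauchy_convergent:
  fixes X :: "nat \<Rightarrow> 'a::real_normed_vector \<Rightarrow>\<^sub>L 'b::{real_normed_vector, complete_space}"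
  assumes "Cauchy X"
  shows "convergent X"
proof -
  {
    fix x::'a
    {
      fix x::'a
      assume "norm x \<le> 1"
      have "Cauchy (\<lambda>n. X n x)"
      proof (rule CauchyI)
        fix e::real
        assume "0 < e"
        from CauchyD[OF \<open>Cauchy X\<close> \<open>0 < e\<close>] obtain M
          where M: "\<And>m n. m \<ge> M \<Longrightarrow> n \<ge> M \<Longrightarrow> norm (X m - X n) < e"
          by auto
        show "\<exists>M. \<forall>m\<ge>M. \<forall>n\<ge>M. norm (X m x - X n x) < e"
        proof (safe intro!: exI[where x=M])
          fix m n
          assume le: "M \<le> m" "M \<le> n"
          have "norm (X m x - X n x) = norm ((X m - X n) x)"
            by (simp add: blinfun.bilinear_simps)
          also have "\<dots> \<le> norm (X m - X n) * norm x"
             by (rule norm_blinfun)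
          also have "\<dots> \<le> norm (X m - X n) * 1"
            using \<open>norm x \<le> 1\<close> norm_ge_zero by (rule mult_left_mono)
          also have "\<dots> = norm (X m - X n)" by simp
          also have "\<dots> < e" using le by fact
          finally show "norm (X m x - X n x) < e" .
        qed
      qed
      hence "convergent (\<lambda>n. X n x)"
        by (metis Cauchy_convergent_iff)
    } note convergent_norm1 = this
    define y where "y = x /\<^sub>R norm x"
    have y: "norm y \<le> 1" and xy: "x = norm x *\<^sub>R y"
      by (simp_all add: y_def inverse_eq_divide)
    have "convergent (\<lambda>n. norm x *\<^sub>R X n y)"
      by (intro bounded_bilinear.convergent[OF bounded_bilinear_scaleR] convergent_const
        convergent_norm1 y)
    also have "(\<lambda>n. norm x *\<^sub>R X n y) = (\<lambda>n. X n x)"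
      by (subst xy) (simp add: blinfun.bilinear_simps)
    finally have "convergent (\<lambda>n. X n x)" .
  }
  then obtain v where v: "\<And>x. (\<lambda>n. X n x) \<longlonglongrightarrow> v x"
    unfolding convergent_def
    by metis
  have "Cauchy (\<lambda>n. norm (X n))"
  proof (rule CauchyI)
    fix e::real
    assume "e > 0"
    from CauchyD[OF \<open>Cauchy X\<close> \<open>0 < e\<close>] obtain M
      where M: "\<And>m n. m \<ge> M \<Longrightarrow> n \<ge> M \<Longrightarrow> norm (X m - X n) < e"
      by auto
    show "\<exists>M. \<forall>m\<ge>M. \<forall>n\<ge>M. norm (norm (X m) - norm (X n)) < e"
    proof (safe intro!: exI[where x=M])
      fix m n assume mn: "m \<ge> M" "n \<ge> M"
      have "norm (norm (X m) - norm (X n)) \<le> norm (X m - X n)"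
        by (metis norm_triangle_ineq3 real_norm_def)
      also have "\<dots> < e" using mn by fact
      finally show "norm (norm (X m) - norm (X n)) < e" .
    qed
  qed
  then obtain K where K: "(\<lambda>n. norm (X n)) \<longlonglongrightarrow> K"
    unfolding Cauchy_convergent_iff convergent_def
    by metis
  have "bounded_linear v"
  proof
    fix x y and r::real
    from tendsto_add[OF v[of x] v [of y]] v[of "x + y", unfolded blinfun.bilinear_simps]
      tendsto_scaleR[OF tendsto_const[of r] v[of x]] v[of "r *\<^sub>R x", unfolded blinfun.bilinear_simps]
    show "v (x + y) = v x + v y" "v (r *\<^sub>R x) = r *\<^sub>R v x"
      by (metis (poly_guards_query) LIMSEQ_unique)+
    show "\<exists>K. \<forall>x. norm (v x) \<le> norm x * K"
    proof (safe intro!: exI[where x=K])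
      fix x
      have "norm (v x) \<le> K * norm x"
        by (rule tendsto_le[OF _ tendsto_mult[OF K tendsto_const] tendsto_norm[OF v]])
          (auto simp: norm_blinfun)
      thus "norm (v x) \<le> norm x * K"
        by (simp add: ac_simps)
    qed
  qed
  hence Bv: "\<And>x. (\<lambda>n. X n x) \<longlonglongrightarrow> Blinfun v x"
    by (auto simp: bounded_linear_Blinfun_apply v)
  have "X \<longlonglongrightarrow> Blinfun v"
  proof (rule LIMSEQ_I)
    fix r::real assume "r > 0"
    define r' where "r' = r / 2"
    have "0 < r'" "r' < r" using \<open>r > 0\<close> by (simp_all add: r'_def)
    from CauchyD[OF \<open>Cauchy X\<close> \<open>r' > 0\<close>]
    obtain M where M: "\<And>m n. m \<ge> M \<Longrightarrow> n \<ge> M \<Longrightarrow> norm (X m - X n) < r'"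
      by metis
    show "\<exists>no. \<forall>n\<ge>no. norm (X n - Blinfun v) < r"
    proof (safe intro!: exI[where x=M])
      fix n assume n: "M \<le> n"
      have "norm (X n - Blinfun v) \<le> r'"
      proof (rule norm_blinfun_bound)
        fix x
        have "eventually (\<lambda>m. m \<ge> M) sequentially"
          by (metis eventually_ge_at_top)
        hence ev_le: "eventually (\<lambda>m. norm (X n x - X m x) \<le> r' * norm x) sequentially"
        proof eventually_elim
          case (elim m)
          have "norm (X n x - X m x) = norm ((X n - X m) x)"
            by (simp add: blinfun.bilinear_simps)
          also have "\<dots> \<le> norm ((X n - X m)) * norm x"
            by (rule norm_blinfun)
          also have "\<dots> \<le> r' * norm x"
            using M[OF n elim] by (simp add: mult_right_mono)
          finally show ?case .
        qed
        have tendsto_v: "(\<lambda>m. norm (X n x - X m x)) \<longlonglongrightarrow> norm (X n x - Blinfun v x)"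
          by (intro tendsto_norm tendsto_diff tendsto_const Bv)
        show "norm ((X n - Blinfun v) x) \<le> r' * norm x"
          by (auto intro!: tendsto_upperbound tendsto_v ev_le simp: blinfun.bilinear_simps)
      qed (simp add: \<open>0 < r'\<close> less_imp_le)
      thus "norm (X n - Blinfun v) < r"
        by (metis \<open>r' < r\<close> le_less_trans)
    qed
  qed
  thus "convergent X"
    by (rule convergentI)
qed

lemma summable_Cauchy_gen:
  fixes f :: "nat \<Rightarrow> 'a::real_normed_vector"
  assumes compl: "\<And>X::nat \<Rightarrow> 'a. Cauchy X \<Longrightarrow> convergent X"
  assumes "\<forall>e>0. \<exists>N. \<forall>m\<ge>N. \<forall>n. norm (sum f {m..<n}) < e"
  shows "summable f"
proof -
  have "Cauchy (\<lambda>n. sum f {..<n})"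
  proof (rule CauchyI)
    fix e :: real assume "0 < e"
    then obtain N where N: "\<And>m n. m \<ge> N \<Longrightarrow> norm (sum f {m..<n}) < e" using assms(2) by blast
    show "\<exists>M. \<forall>m\<ge>M. \<forall>n\<ge>M. norm (sum f {..<m} - sum f {..<n}) < e"
    proof (intro exI allI impI)
      fix m n assume mn: "N \<le> m" "N \<le> n"
      show "norm (sum f {..<m} - sum f {..<n}) < e"
      proof (cases m n rule: linorder_class.le_cases)
        assume "m \<le> n"
        then have "sum f {..<n} = sum f {..<m} + sum f {m..<n}"
          by (simp add: lessThan_atLeast0 sum.atLeastLessThan_concat)
        then have "norm (sum f {..<m} - sum f {..<n}) = norm (sum f {m..<n})"
          by (simp add: norm_minus_commute)
        then show ?thesis using N[OF mn(1), of n] by simp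
      next
        assume "n \<le> m"
        then have "sum f {..<m} = sum f {..<n} + sum f {n..<m}"
          by (simp add: lessThan_atLeast0 sum.atLeastLessThan_concat)
        then show ?thesis using N[OF mn(2), of m] by simp
      qed
    qed
  qed
  then show ?thesis using compl by (simp add: summable_iff_convergent)
qed

lemma summable_norm_cancel_gen:
  fixes f :: "nat \<Rightarrow> 'a::real_normed_vector"
  assumes compl: "\<And>X::nat \<Rightarrow> 'a. Cauchy X \<Longrightarrow> convergent X"
  assumes "summable (\<lambda>n. norm (f n))"
  shows "summable f"
proof (rule summable_Cauchy_gen[OF compl])
  have "\<forall>e>0. \<exists>N. \<forall>m\<ge>N. \<forall>n. norm (sum (\<lambda>n. norm (f n)) {m..<n}) < e"
    using assms(2) by (simp only: summable_Cauchy)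
  then show "\<forall>e>0. \<exists>N. \<forall>m\<ge>N. \<forall>n. norm (sum f {m..<n}) < e"
  proof (intro allI impI)
    fix e :: real assume "e > 0"
    then obtain N where N: "\<forall>m\<ge>N. \<forall>n. norm (sum (\<lambda>n. norm (f n)) {m..<n}) < e"
      using \<open>\<forall>e>0. _\<close> by blast
    show "\<exists>N. \<forall>m\<ge>N. \<forall>n. norm (sum f {m..<n}) < e"
    proof (intro exI allI impI)
      fix m n assume "N \<le> m"
      have "norm (sum f {m..<n}) \<le> sum (\<lambda>n. norm (f n)) {m..<n}" by (rule norm_sum)
      also have "\<dots> \<le> norm (sum (\<lambda>n. norm (f n)) {m..<n})" by simp
      also have "\<dots> < e" using N \<open>N \<le> m\<close> by blast
      finally show "norm (sum f {m..<n}) < e" .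
    qed
  qed
qed

lemma summable_norm_cancel_op:
  fixes f :: "nat \<Rightarrow> 'a::real_normed_vector \<Rightarrow>\<^sub>L 'b::{real_normed_vector, complete_space}"
  shows "summable (\<lambda>n. norm (f n)) \<Longrightarrow> summable f"
  by (rule summable_norm_cancel_gen[OF blinfun_Cauchy_convergent])

lemma summable_norm_op:
  fixes f :: "nat \<Rightarrow> 'a::real_normed_vector \<Rightarrow>\<^sub>L 'b::{real_normed_vector, complete_space}"
  assumes s: "summable (\<lambda>n. norm (f n))"
  shows "norm (suminf f) \<le> (\<Sum>n. norm (f n))"
proof -
  have sf: "summable f" using s by (rule summable_norm_cancel_op)
  have 1: "(\<lambda>n. norm (\<Sum>i<n. f i)) \<longlonglongrightarrow> norm (suminf f)"
    by (intro tendsto_norm summable_LIMSEQ sf)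
  have 2: "(\<lambda>n. \<Sum>i<n. norm (f i)) \<longlonglongrightarrow> (\<Sum>n. norm (f n))"
    by (rule summable_LIMSEQ[OF s])
  show ?thesis
    by (rule tendsto_le[OF trivial_limit_sequentially 2 1]) (auto intro: always_eventually norm_sum)
qed

lemma blinfun_compose_sum_sum:
  fixes a b :: "nat \<Rightarrow> ('h::real_normed_vector \<Rightarrow>\<^sub>L 'h)"
  shows "(sum a A) o\<^sub>L (sum b B) = (\<Sum>(i,j)\<in>A\<times>B. a i o\<^sub>L b j)"
proof -
  have "(sum a A) o\<^sub>L (sum b B) = (\<Sum>i\<in>A. a i o\<^sub>L sum b B)"
    by (rule bounded_bilinear.sum_left[OF bounded_bilinear_blinfun_compose])
  also have "\<dots> = (\<Sum>i\<in>A. \<Sum>j\<in>B. a i o\<^sub>L b j)"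
    by (simp add: bounded_bilinear.sum_right[OF bounded_bilinear_blinfun_compose])
  also have "\<dots> = (\<Sum>(i,j)\<in>A\<times>B. a i o\<^sub>L b j)"
    by (rule sum.cartesian_product)
  finally show ?thesis .
qed

lemma Cauchy_product_sums_op:
  fixes a b :: "nat \<Rightarrow> ('h::{real_normed_vector, complete_space} \<Rightarrow>\<^sub>L 'h)"
  assumes a: "summable (\<lambda>k. norm (a k))"
    and b: "summable (\<lambda>k. norm (b k))"
  shows "(\<lambda>k. \<Sum>i\<le>k. a i o\<^sub>L b (k - i)) sums ((\<Sum>k. a k) o\<^sub>L (\<Sum>k. b k))"
proof -
  let ?S1 = "\<lambda>n::nat. {..<n} \<times> {..<n}"
  let ?S2 = "\<lambda>n::nat. {(i,j). i + j < n}"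
  have S1_mono: "\<And>m n. m \<le> n \<Longrightarrow> ?S1 m \<subseteq> ?S1 n" by auto
  have S2_le_S1: "\<And>n. ?S2 n \<subseteq> ?S1 n" by auto
  have S1_le_S2: "\<And>n. ?S1 (n div 2) \<subseteq> ?S2 n" by auto
  have finite_S1: "\<And>n. finite (?S1 n)" by simp
  with S2_le_S1 have finite_S2: "\<And>n. finite (?S2 n)" by (rule finite_subset)

  let ?g = "\<lambda>(i,j). a i o\<^sub>L b j"
  let ?f = "\<lambda>(i,j). norm (a i) * norm (b j)"
  have f_nonneg: "\<And>x. 0 \<le> ?f x" by auto
  then have norm_sum_f: "\<And>A. norm (sum ?f A) = sum ?f A"
    unfolding real_norm_def
    by (simp only: abs_of_nonneg sum_nonneg [rule_format])

  have "(\<lambda>n. (\<Sum>k<n. a k) o\<^sub>L (\<Sum>k<n. b k)) \<longlonglongrightarrow> ((\<Sum>k. a k) o\<^sub>L (\<Sum>k. b k))"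
    by (intro bounded_bilinear.tendsto[OF bounded_bilinear_blinfun_compose] summable_LIMSEQ
        summable_norm_cancel_op [OF a] summable_norm_cancel_op [OF b])
  then have 1: "(\<lambda>n. sum ?g (?S1 n)) \<longlonglongrightarrow> ((\<Sum>k. a k) o\<^sub>L (\<Sum>k. b k))"
    by (simp only: blinfun_compose_sum_sum)

  have "(\<lambda>n. (\<Sum>k<n. norm (a k)) * (\<Sum>k<n. norm (b k))) \<longlonglongrightarrow> (\<Sum>k. norm (a k)) * (\<Sum>k. norm (b k))"
    using a b by (intro tendsto_mult summable_LIMSEQ)
  then have "(\<lambda>n. sum ?f (?S1 n)) \<longlonglongrightarrow> (\<Sum>k. norm (a k)) * (\<Sum>k. norm (b k))"
    by (simp only: sum_product sum.Sigma [rule_format] finite_lessThan)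
  then have "convergent (\<lambda>n. sum ?f (?S1 n))"
    by (rule convergentI)
  then have Cauchy: "Cauchy (\<lambda>n. sum ?f (?S1 n))"
    by (rule convergent_Cauchy)
  have "Zfun (\<lambda>n. sum ?f (?S1 n - ?S2 n)) sequentially"
  proof (rule ZfunI, simp only: eventually_sequentially norm_sum_f)
    fix r :: real
    assume r: "0 < r"
    from CauchyD [OF Cauchy r] obtain N
      where "\<forall>m\<ge>N. \<forall>n\<ge>N. norm (sum ?f (?S1 m) - sum ?f (?S1 n)) < r" ..
    then have "\<And>m n. N \<le> n \<Longrightarrow> n \<le> m \<Longrightarrow> norm (sum ?f (?S1 m - ?S1 n)) < r"
      by (simp only: sum_diff finite_S1 S1_mono)
    then have N: "\<And>m n. N \<le> n \<Longrightarrow> n \<le> m \<Longrightarrow> sum ?f (?S1 m - ?S1 n) < r"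
      by (simp only: norm_sum_f)
    show "\<exists>N. \<forall>n\<ge>N. sum ?f (?S1 n - ?S2 n) < r"
    proof (intro exI allI impI)
      fix n
      assume "2 * N \<le> n"
      then have n: "N \<le> n div 2" by simp
      have "sum ?f (?S1 n - ?S2 n) \<le> sum ?f (?S1 n - ?S1 (n div 2))"
        by (intro sum_mono2 finite_Diff finite_S1 f_nonneg Diff_mono subset_refl S1_le_S2)
      also have "\<dots> < r"
        using n div_le_dividend by (rule N)
      finally show "sum ?f (?S1 n - ?S2 n) < r" .
    qed
  qed
  then have "Zfun (\<lambda>n. sum ?g (?S1 n - ?S2 n)) sequentially"
    apply (rule Zfun_le [rule_format])
    apply (simp only: norm_sum_f)
    apply (rule order_trans [OF norm_sum sum_mono])
    apply (auto simp add: norm_blinfun_compose)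
    done
  then have 2: "(\<lambda>n. sum ?g (?S1 n) - sum ?g (?S2 n)) \<longlonglongrightarrow> 0"
    unfolding tendsto_Zfun_iff diff_0_right
    by (simp only: sum_diff finite_S1 S2_le_S1)
  with 1 have "(\<lambda>n. sum ?g (?S2 n)) \<longlonglongrightarrow> ((\<Sum>k. a k) o\<^sub>L (\<Sum>k. b k))"
    by (rule Lim_transform2)
  then show ?thesis
    by (simp only: sums_def sum.triangle_reindex)
qed

fun opow :: "('a::real_normed_vector \<Rightarrow>\<^sub>L 'a) \<Rightarrow> nat \<Rightarrow> ('a \<Rightarrow>\<^sub>L 'a)" where
  "opow T 0 = id_blinfun"
| "opow T (Suc k) = T o\<^sub>L opow T k"

lemma compose_id_right[simp]: "X o\<^sub>L id_blinfun = X"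
  by (rule blinfun_eqI) simp
lemma compose_id_left[simp]: "id_blinfun o\<^sub>L X = X"
  by (rule blinfun_eqI) simp
lemma compose_assoc: "(X o\<^sub>L Y) o\<^sub>L Z = X o\<^sub>L (Y o\<^sub>L Z)"
  by (rule blinfun_eqI) simp

lemma opow_add: "opow T (i + j) = opow T i o\<^sub>L opow T j"
  by (induction i) (simp_all add: compose_assoc)

lemma opow_Suc': "opow T (Suc k) = opow T k o\<^sub>L T"
  using opow_add[of T k 1] by simp

lemma norm_opow: "norm (opow T k) \<le> norm T ^ k"
proof (induction k)
  case 0 then show ?case by (simp add: norm_blinfun_id_le)
next
  case (Suc k)
  have "norm (opow T (Suc k)) \<le> norm T * norm (opow T k)"
    by (simp add: norm_blinfun_compose)
  also have "\<dots> \<le> norm T * norm T ^ k"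
    using Suc by (intro mult_left_mono) auto
  finally show ?case by simp
qed

lemma opow_commute:
  assumes "X o\<^sub>L T = T o\<^sub>L X"
  shows "X o\<^sub>L opow T k = opow T k o\<^sub>L X"
proof (induction k)
  case 0 then show ?case by simp
next
  case (Suc k)
  have "X o\<^sub>L opow T (Suc k) = (X o\<^sub>L T) o\<^sub>L opow T k" by (simp add: compose_assoc)
  also have "\<dots> = T o\<^sub>L (X o\<^sub>L opow T k)" by (simp add: assms compose_assoc)
  also have "\<dots> = opow T (Suc k) o\<^sub>L X" by (simp add: Suc compose_assoc)
  finally show ?case .
qed

lemma sa_apply: "self_adjoint_op A \<Longrightarrow> blinfun_apply A x \<bullet> y = x \<bullet> blinfun_apply A y"
  by (simp add: self_adjoint_op_def)

lemma sa_opow: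
  fixes T :: "'a::real_inner \<Rightarrow>\<^sub>L 'a"
  assumes "self_adjoint_op T"
  shows "self_adjoint_op (opow T k)"
proof (induction k)
  case 0 then show ?case by (simp add: self_adjoint_op_def)
next
  case (Suc k)
  show ?case unfolding self_adjoint_op_def
  proof (intro allI)
    fix x y
    have "opow T (Suc k) x \<bullet> y = T (opow T k x) \<bullet> y" by simp
    also have "\<dots> = opow T k x \<bullet> T y" using assms by (simp add: sa_apply)
    also have "\<dots> = x \<bullet> opow T k (T y)" using Suc by (simp add: sa_apply)
    also have "\<dots> = x \<bullet> opow T (Suc k) y"
    proof -
      have "opow T k o\<^sub>L T = T o\<^sub>L opow T k" using opow_Suc'[of T k] by simp
      then have "opow T k (T y) = T (opow T k y)" by (metis blinfun_apply_blinfun_compose)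
      then show ?thesis by simp
    qed
    finally show "opow T (Suc k) x \<bullet> y = x \<bullet> opow T (Suc k) y" .
  qed
qed

lemma psd_opow:
  fixes T :: "'a::real_inner \<Rightarrow>\<^sub>L 'a"
  assumes "psd_op T"
  shows "0 \<le> opow T k x \<bullet> x"
proof -
  have sa: "self_adjoint_op T" and pos: "\<And>x. 0 \<le> T x \<bullet> x" using assms by (auto simp: psd_op_def)
  have "k = k div 2 + k div 2 \<or> k = Suc (k div 2 + k div 2)" by presburger
  then obtain j where "k = j + j \<or> k = Suc (j + j)" by blast
  then show ?thesis
  proof
    assume k: "k = j + j"
    have "opow T k x \<bullet> x = opow T j x \<bullet> opow T j x"
      using sa_opow[OF sa, of j] by (simp add: k opow_add sa_apply)
    then show ?thesis by simp
  next
    assume k: "k = Suc (j + j)"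
    have "opow T k = opow T j o\<^sub>L opow T (Suc j)"
      using opow_add[of T j "Suc j"] by (simp add: k)
    then have "opow T k x \<bullet> x = opow T j (T (opow T j x)) \<bullet> x"
      by simp
    also have "\<dots> = T (opow T j x) \<bullet> opow T j x"
      using sa_opow[OF sa, of j] by (simp add: sa_apply)
    finally show ?thesis using pos by simp
  qed
qed

lemma key_ineq:
  fixes T :: "'a::real_inner \<Rightarrow>\<^sub>L 'a"
  assumes sa: "self_adjoint_op T" and pos: "\<And>x. 0 \<le> T x \<bullet> x" and q: "q > 0"
    and bd: "T (T w) \<bullet> T w \<le> q * (norm (T w))\<^sup>2"
  shows "(norm (T w))\<^sup>2 \<le> q * (T w \<bullet> w)"
proof -
  define u where "u = T w"
  define s where "s = 1 / q"
  have s: "s > 0" "q * s = 1" using q by (auto simp: s_def)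
  have "0 \<le> T (w - s *\<^sub>R u) \<bullet> (w - s *\<^sub>R u)" by (rule pos)
  also have "\<dots> = u \<bullet> w - s * (u \<bullet> u) - s * (T u \<bullet> w) + s * s * (T u \<bullet> u)"
    by (simp add: u_def blinfun.diff_right blinfun.scaleR_right inner_diff_left inner_diff_right
        algebra_simps)
  also have "T u \<bullet> w = u \<bullet> u" using sa by (simp add: sa_apply u_def)
  finally have 1: "0 \<le> u \<bullet> w - 2 * s * (u \<bullet> u) + s * s * (T u \<bullet> u)" by simp
  have "s * s * (T u \<bullet> u) \<le> s * s * (q * (u \<bullet> u))"
    using bd s by (intro mult_left_mono) (auto simp: u_def power2_norm_eq_inner)
  also have "\<dots> = s * (u \<bullet> u)" using s by (simp add: algebra_simps)
  finally have "0 \<le> u \<bullet> w - s * (u \<bullet> u)" using 1 by simp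
  then have "q * (s * (u \<bullet> u)) \<le> q * (u \<bullet> w)" using q by (intro mult_left_mono) auto
  then have "u \<bullet> u \<le> q * (u \<bullet> w)" using s by (simp add: mult.assoc[symmetric])
  then show ?thesis by (simp add: u_def power2_norm_eq_inner)
qed

definition dco :: "nat \<Rightarrow> real" where "dco k = (-1)^k * ((-1/2::real) gchoose k)"

lemma dco_0[simp]: "dco 0 = 1" by (simp add: dco_def)

lemma dco_Suc: "dco (Suc k) = dco k * ((real k + 1/2) / (real k + 1))"
proof -
  have "(-1/2::real) * ((-1/2) gchoose k) = of_nat k * ((-1/2) gchoose k) + of_nat (Suc k) * ((-1/2) gchoose (Suc k))"
    by (rule gbinomial_mult_1)
  then have eq: "((-1/2::real) gchoose (Suc k)) = - (real k + 1/2) * ((-1/2) gchoose k) / (real k + 1)"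
    by (simp add: field_simps)
  have "dco (Suc k) = (-1)^k * (-1) * ((-1/2::real) gchoose (Suc k))"
    by (simp add: dco_def)
  also have "\<dots> = (-1)^k * ((-1/2::real) gchoose k) * ((real k + 1/2) / (real k + 1))"
    unfolding eq by (simp add: algebra_simps)
  finally show ?thesis by (simp add: dco_def)
qed

lemma dco_bounds: "0 \<le> dco k \<and> dco k \<le> 1"
proof (induction k)
  case 0 then show ?case by simp
next
  case (Suc k)
  have f: "0 \<le> (real k + 1/2) / (real k + 1)" "(real k + 1/2) / (real k + 1) \<le> 1"
    by (auto simp: field_simps)
  have "0 \<le> dco k * ((real k + 1/2) / (real k + 1))"
    using Suc f by (intro mult_nonneg_nonneg) auto
  moreover have "dco k * ((real k + 1/2) / (real k + 1)) \<le> 1"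
    using Suc f by (intro mult_le_one) auto
  ultimately show ?case unfolding dco_Suc by simp
qed

lemma dco_conv: "(\<Sum>i\<le>k. dco i * dco (k - i)) = 1"
proof -
  have "fps_nth (fps_binomial (-1/2::real) * fps_binomial (-1/2)) k = fps_nth (fps_binomial (-1)) k"
    using fps_binomial_add_mult[of "-1/2::real" "-1/2"] by simp
  then have 1: "(\<Sum>i=0..k. ((-1/2::real) gchoose i) * ((-1/2) gchoose (k - i))) = ((-1::real) gchoose k)"
    by (simp add: fps_mult_nth)
  have "((-1::real) gchoose k) = (-1)^k * (real k gchoose k)"
    using gbinomial_minus[of "1::real" k] by simp
  also have "(real k gchoose k) = 1"
    using binomial_gbinomial[of k k, where 'a=real] by simp
  finally have 2: "((-1::real) gchoose k) = (-1)^k" by simp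
  have "(\<Sum>i\<le>k. dco i * dco (k - i)) = (\<Sum>i\<le>k. (-1)^k * (((-1/2::real) gchoose i) * ((-1/2) gchoose (k - i))))"
  proof (rule sum.cong)
    fix i assume "i \<in> {..k}"
    then have "(-1::real)^i * (-1)^(k-i) = (-1)^k" by (simp flip: power_add)
    then show "dco i * dco (k - i) = (-1)^k * (((-1/2::real) gchoose i) * ((-1/2) gchoose (k - i)))"
      unfolding dco_def by (metis (no_types, lifting) mult.assoc mult.left_commute)
  qed simp
  also have "\<dots> = (-1)^k * (\<Sum>i=0..k. ((-1/2::real) gchoose i) * ((-1/2) gchoose (k - i)))"
    by (simp add: sum_distrib_left atLeast0AtMost)
  also have "\<dots> = 1" using 1 2 by (simp flip: power_add)
  finally show ?thesis .
qed

lemma bl_right: "bounded_linear (\<lambda>X. X o\<^sub>L Y)"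
  by (rule bounded_bilinear.bounded_linear_left[OF bounded_bilinear_blinfun_compose])
lemma bl_left: "bounded_linear (\<lambda>X. Y o\<^sub>L X)"
  by (rule bounded_bilinear.bounded_linear_right[OF bounded_bilinear_blinfun_compose])
lemma bl_inner: "bounded_linear (\<lambda>X. blinfun_apply X x \<bullet> y)"
  by (rule bounded_linear_compose[OF bounded_linear_inner_left blinfun.bounded_linear_left])

lemma compose_scaleR_left: "(r *\<^sub>R X) o\<^sub>L Y = r *\<^sub>R (X o\<^sub>L Y)"
  by (rule blinfun_eqI) (simp add: blinfun.scaleR_left)
lemma compose_scaleR_right: "X o\<^sub>L (r *\<^sub>R Y) = r *\<^sub>R (X o\<^sub>L Y)"
  by (rule blinfun_eqI) (simp add: blinfun.scaleR_right blinfun.scaleR_left)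

lemma opow_apply_comm:
  "blinfun_apply (opow T k) (blinfun_apply T x) = blinfun_apply T (blinfun_apply (opow T k) x)"
proof -
  have "opow T k o\<^sub>L T = T o\<^sub>L opow T k" using opow_Suc'[of T k] by simp
  then show ?thesis by (metis blinfun_apply_blinfun_compose)
qed

lemma inv_sqrt_construct:
  fixes A :: "'h::{real_inner, complete_space} \<Rightarrow>\<^sub>L 'h"
  assumes sa: "self_adjoint_op A" and lb: "\<And>x. l * (norm x)\<^sup>2 \<le> A x \<bullet> x" and l: "l > 0"
  shows "\<exists>B. (pd_op B \<and> B o\<^sub>L B o\<^sub>L A = id_blinfun \<and> A o\<^sub>L B o\<^sub>L B = id_blinfun) \<and>
             (\<forall>X. X o\<^sub>L A = A o\<^sub>L X \<longrightarrow> X o\<^sub>L B = B o\<^sub>L X)"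
proof -
  define c where "c = norm A + 2*l"
  have c: "c > 0" "norm A \<le> c" "2*l \<le> c" using l norm_ge_zero[of A] unfolding c_def by linarith+
  define T where "T = id_blinfun - (1/c) *\<^sub>R A"
  have Tapp: "\<And>x. T x = x - (1/c) *\<^sub>R A x" by (simp add: T_def blinfun.diff_left blinfun.scaleR_left)
  have saT: "self_adjoint_op T"
    using sa by (simp add: self_adjoint_op_def Tapp inner_diff_left inner_diff_right)
  define q where "q = 1 - l/c"
  have q: "0 < q" "q < 1" using c l by (auto simp: q_def field_simps)
  have Ale: "A x \<bullet> x \<le> c * (norm x)\<^sup>2" for x
  proof -
    have "A x \<bullet> x \<le> norm (A x) * norm x" by (rule norm_cauchy_schwarz)
    also have "\<dots> \<le> (norm A * norm x) * norm x" by (intro mult_right_mono norm_blinfun) auto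
    also have "\<dots> \<le> c * (norm x)\<^sup>2"
      using mult_right_mono[OF c(2), of "norm x * norm x"] by (simp add: power2_eq_square mult.assoc)
    finally show ?thesis .
  qed
  have Tx: "T x \<bullet> x = (norm x)\<^sup>2 - (A x \<bullet> x) / c" for x
    by (simp add: Tapp inner_diff_left power2_norm_eq_inner)
  have posT: "0 \<le> T x \<bullet> x" for x
  proof -
    have "(A x \<bullet> x) / c \<le> (norm x)\<^sup>2" using Ale[of x] c by (simp add: pos_divide_le_eq mult.commute)
    then show ?thesis by (simp add: Tx)
  qed
  have upT: "T x \<bullet> x \<le> q * (norm x)\<^sup>2" for x
  proof -
    have "l * (norm x)\<^sup>2 / c \<le> (A x \<bullet> x) / c" using lb[of x] c by (simp add: divide_right_mono)
    then show ?thesis by (simp add: Tx q_def algebra_simps)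
  qed
  have normT: "norm (T w) \<le> q * norm w" for w
  proof -
    have "(norm (T w))\<^sup>2 \<le> q * (T w \<bullet> w)"
      by (rule key_ineq[OF saT posT q(1) upT])
    also have "\<dots> \<le> q * (q * (norm w)\<^sup>2)" using q by (intro mult_left_mono upT) auto
    also have "\<dots> = (q * norm w)\<^sup>2" by (simp add: power2_eq_square ac_simps)
    finally have "(norm (T w))\<^sup>2 \<le> (q * norm w)\<^sup>2" .
    then show ?thesis by (rule power2_le_imp_le) (use q in simp)
  qed
  have nT: "norm T \<le> q"
    using q normT by (intro norm_blinfun_bound) auto
  have nP: "norm (opow T k) \<le> q^k" for k
    using norm_opow[of T k] power_mono[OF nT, of k] by auto
  define a where "a k = dco k *\<^sub>R opow T k" for k
  have na: "norm (a k) \<le> q^k" for k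
  proof -
    have "norm (a k) = \<bar>dco k\<bar> * norm (opow T k)" by (simp add: a_def)
    also have "\<dots> \<le> 1 * q^k" using dco_bounds[of k] nP[of k] by (intro mult_mono) auto
    finally show ?thesis by simp
  qed
  have sumq: "summable (\<lambda>k. q^k)" using q by (intro summable_geometric) auto
  have sna: "summable (\<lambda>k. norm (a k))"
    by (rule summable_comparison_test'[OF sumq]) (simp add: na)
  have snP: "summable (\<lambda>k. norm (opow T k))"
    by (rule summable_comparison_test'[OF sumq]) (simp add: nP)
  have sa_sum: "summable a" by (rule summable_norm_cancel_op[OF sna])
  have sP: "summable (\<lambda>k. opow T k)" by (rule summable_norm_cancel_op[OF snP])
  define S where "S = suminf a"
  define G where "G = (\<Sum>k. opow T k)"
  have conv: "(\<Sum>i\<le>k. a i o\<^sub>L a (k - i)) = opow T k" for k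
  proof -
    have "(\<Sum>i\<le>k. a i o\<^sub>L a (k - i)) = (\<Sum>i\<le>k. (dco i * dco (k - i)) *\<^sub>R opow T k)"
    proof (rule sum.cong)
      fix i assume "i \<in> {..k}"
      then have "opow T i o\<^sub>L opow T (k - i) = opow T k"
        using opow_add[of T i "k - i"] by simp
      then show "a i o\<^sub>L a (k - i) = (dco i * dco (k - i)) *\<^sub>R opow T k"
        by (simp add: a_def compose_scaleR_left compose_scaleR_right)
    qed simp
    also have "\<dots> = (\<Sum>i\<le>k. dco i * dco (k - i)) *\<^sub>R opow T k"
      by (simp add: scaleR_sum_left)
    finally show ?thesis by (simp add: dco_conv)
  qed
  have SS: "S o\<^sub>L S = G"
  proof -
    have "(\<lambda>k. \<Sum>i\<le>k. a i o\<^sub>L a (k - i)) sums (S o\<^sub>L S)"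
      unfolding S_def by (rule Cauchy_product_sums_op[OF sna sna])
    then have "(\<lambda>k. opow T k) sums (S o\<^sub>L S)" by (simp add: conv)
    then show ?thesis by (simp add: G_def sums_iff)
  qed
  have Ptend: "(\<lambda>k. opow T k) \<longlonglongrightarrow> 0"
  proof (rule Lim_null_comparison)
    show "\<forall>\<^sub>F k in sequentially. norm (opow T k) \<le> q^k" by (simp add: nP)
    show "(\<lambda>k. q^k) \<longlonglongrightarrow> 0" using q by (intro LIMSEQ_power_zero) auto
  qed
  have GL: "G o\<^sub>L (id_blinfun - T) = id_blinfun"
  proof -
    have "G o\<^sub>L (id_blinfun - T) = (\<Sum>k. opow T k o\<^sub>L (id_blinfun - T))"
      unfolding G_def by (rule bounded_linear.suminf[OF bl_right sP])
    also have "(\<lambda>k. opow T k o\<^sub>L (id_blinfun - T)) = (\<lambda>k. opow T k - opow T (Suc k))"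
      by (intro ext blinfun_eqI) (simp add: opow_Suc' blinfun.diff_left blinfun.diff_right opow_apply_comm)
    also have "(\<Sum>k. opow T k - opow T (Suc k)) = opow T 0 - 0"
      using telescope_sums'[OF Ptend] by (simp add: sums_iff)
    finally show ?thesis by simp
  qed
  have GR: "(id_blinfun - T) o\<^sub>L G = id_blinfun"
  proof -
    have "(id_blinfun - T) o\<^sub>L G = (\<Sum>k. (id_blinfun - T) o\<^sub>L opow T k)"
      unfolding G_def by (rule bounded_linear.suminf[OF bl_left sP])
    also have "(\<lambda>k. (id_blinfun - T) o\<^sub>L opow T k) = (\<lambda>k. opow T k - opow T (Suc k))"
      by (intro ext blinfun_eqI) (simp add: blinfun.diff_left blinfun.diff_right)
    also have "(\<Sum>k. opow T k - opow T (Suc k)) = opow T 0 - 0"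
      using telescope_sums'[OF Ptend] by (simp add: sums_iff)
    finally show ?thesis by simp
  qed
  have Aeq: "A = c *\<^sub>R (id_blinfun - T)"
    using c by (intro blinfun_eqI) (simp add: T_def blinfun.diff_left blinfun.scaleR_left)
  define B where "B = (1/sqrt c) *\<^sub>R S"
  have BB: "B o\<^sub>L B = (1/c) *\<^sub>R G"
    using c by (simp add: B_def compose_scaleR_left compose_scaleR_right SS real_sqrt_mult[symmetric])
  have P1: "B o\<^sub>L B o\<^sub>L A = id_blinfun"
    using c by (simp add: BB Aeq compose_scaleR_left compose_scaleR_right GL)
  have P2: "A o\<^sub>L B o\<^sub>L B = id_blinfun"
    using c by (simp add: compose_assoc BB Aeq compose_scaleR_left compose_scaleR_right GR)
  have sinner: "summable (\<lambda>k. a k x \<bullet> y)" for x y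
    using bounded_linear.summable[OF bl_inner sa_sum] by simp
  have Sinner: "S x \<bullet> y = (\<Sum>k. dco k * (opow T k x \<bullet> y))" for x y
  proof -
    have "S x \<bullet> y = (\<Sum>k. a k x \<bullet> y)"
      unfolding S_def by (rule bounded_linear.suminf[OF bl_inner sa_sum])
    then show ?thesis by (simp add: a_def blinfun.scaleR_left)
  qed
  have saS: "self_adjoint_op S"
    unfolding self_adjoint_op_def
  proof (intro allI)
    fix x y
    have "S x \<bullet> y = (\<Sum>k. dco k * (opow T k y \<bullet> x))"
    proof -
      have "opow T k x \<bullet> y = opow T k y \<bullet> x" for k
        using sa_opow[OF saT, of k] by (metis sa_apply inner_commute)
      then show ?thesis unfolding Sinner by simp
    qed
    also have "\<dots> = S y \<bullet> x" by (simp add: Sinner)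
    finally show "S x \<bullet> y = x \<bullet> S y" by (simp add: inner_commute)
  qed
  have posS: "(norm x)\<^sup>2 \<le> S x \<bullet> x" for x
  proof -
    have sm: "summable (\<lambda>k. dco k * (opow T k x \<bullet> x))"
      using sinner[of x x] by (simp add: a_def blinfun.scaleR_left)
    have nn: "0 \<le> dco k * (opow T k x \<bullet> x)" for k
      using dco_bounds[of k] psd_opow[of T k x] saT posT
      by (intro mult_nonneg_nonneg) (auto simp: psd_op_def)
    have "(\<Sum>k\<in>{0}. dco k * (opow T k x \<bullet> x)) \<le> (\<Sum>k. dco k * (opow T k x \<bullet> x))"
      by (rule sum_le_suminf[OF sm]) (auto intro: nn)
    then show ?thesis by (simp add: Sinner power2_norm_eq_inner)
  qed
  have pdB: "pd_op B"
    unfolding pd_op_def self_adjoint_op_def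
  proof (intro conjI allI impI)
    fix x y show "B x \<bullet> y = x \<bullet> B y"
      using saS by (simp add: B_def blinfun.scaleR_left sa_apply)
  next
    fix x :: 'h assume "x \<noteq> 0"
    then have "0 < (norm x)\<^sup>2" by simp
    also have "\<dots> \<le> S x \<bullet> x" by (rule posS)
    finally have "0 < (1 / sqrt c) * (S x \<bullet> x)" using c by simp
    then show "0 < B x \<bullet> x" by (simp add: B_def blinfun.scaleR_left)
  qed
  have comm: "X o\<^sub>L B = B o\<^sub>L X" if XA: "X o\<^sub>L A = A o\<^sub>L X" for X
  proof -
    have XAx: "X (A x) = A (X x)" for x
      using arg_cong[OF XA, of "\<lambda>F. blinfun_apply F x"] by simp
    have XT: "X o\<^sub>L T = T o\<^sub>L X"
      by (rule blinfun_eqI) (simp add: Tapp blinfun.diff_right blinfun.scaleR_right XAx)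
    have "X o\<^sub>L S = (\<Sum>k. X o\<^sub>L a k)"
      unfolding S_def by (rule bounded_linear.suminf[OF bl_left sa_sum])
    also have "(\<lambda>k. X o\<^sub>L a k) = (\<lambda>k. a k o\<^sub>L X)"
      using opow_commute[OF XT] by (simp add: a_def compose_scaleR_left compose_scaleR_right)
    also have "(\<Sum>k. a k o\<^sub>L X) = S o\<^sub>L X"
      unfolding S_def by (rule bounded_linear.suminf[OF bl_right sa_sum, symmetric])
    finally show ?thesis by (simp add: B_def compose_scaleR_left compose_scaleR_right)
  qed
  show ?thesis using pdB P1 P2 comm by blast
qed

lemma comp_apply_eq:
  assumes "F o\<^sub>L G o\<^sub>L H = id_blinfun"
  shows "F (G (H y)) = y"
  using arg_cong[OF assms, of "\<lambda>X. blinfun_apply X y"] by simp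

lemma inv_sqrt_unique:
  fixes A B B' :: "'h::real_inner \<Rightarrow>\<^sub>L 'h"
  assumes pB: "pd_op B" and B1: "B o\<^sub>L B o\<^sub>L A = id_blinfun" and B2: "A o\<^sub>L B o\<^sub>L B = id_blinfun"
    and comm: "\<forall>X. X o\<^sub>L A = A o\<^sub>L X \<longrightarrow> X o\<^sub>L B = B o\<^sub>L X"
    and pB': "pd_op B'" and B1': "B' o\<^sub>L B' o\<^sub>L A = id_blinfun" and B2': "A o\<^sub>L B' o\<^sub>L B' = id_blinfun"
  shows "B' = B"
proof -
  have E1: "B (B (A y)) = y" for y using comp_apply_eq[OF B1] .
  have E1': "B' (B' (A y)) = y" for y using comp_apply_eq[OF B1'] .
  have E2': "A (B' (B' y)) = y" for y using comp_apply_eq[OF B2'] .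
  have cA: "B' o\<^sub>L A = A o\<^sub>L B'"
  proof (rule blinfun_eqI)
    fix x
    have "A (B' x) = A (B' (B' (B' (A x))))" by (simp add: E1')
    also have "\<dots> = B' (A x)" by (rule E2')
    finally show "(B' o\<^sub>L A) x = (A o\<^sub>L B') x" by simp
  qed
  have cB: "B' (B x) = B (B' x)" for x
    using arg_cong[OF comm[rule_format, OF cA], of "\<lambda>X. blinfun_apply X x"] by simp
  have BB: "B (B y) = B' (B' y)" for y
  proof -
    have "B (B y) = B (B (A (B' (B' y))))" by (simp add: E2')
    also have "\<dots> = B' (B' y)" by (rule E1)
    finally show ?thesis .
  qed
  show ?thesis
  proof (rule blinfun_eqI)
    fix x
    define z where "z = B x - B' x"
    have "B z + B' z = 0"
      by (simp add: z_def blinfun.diff_right BB cB)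
    then have "B z \<bullet> z + B' z \<bullet> z = 0" by (metis inner_add_left inner_zero_left)
    moreover have "z \<noteq> 0 \<Longrightarrow> 0 < B z \<bullet> z" "z \<noteq> 0 \<Longrightarrow> 0 < B' z \<bullet> z"
      using pB pB' by (auto simp: pd_op_def)
    ultimately have "z = 0" by (metis add_pos_pos less_irrefl)
    then show "B' x = B x" by (simp add: z_def)
  qed
qed

lemma inv_sqrt_op_props:
  fixes A :: "'h::{real_inner, complete_space} \<Rightarrow>\<^sub>L 'h"
  assumes sa: "self_adjoint_op A" and lb: "\<And>x. l * (norm x)\<^sup>2 \<le> A x \<bullet> x" and l: "l > 0"
  shows "pd_op (inv_sqrt_op A) \<and> inv_sqrt_op A o\<^sub>L inv_sqrt_op A o\<^sub>L A = id_blinfun \<and>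
         A o\<^sub>L inv_sqrt_op A o\<^sub>L inv_sqrt_op A = id_blinfun"
proof -
  obtain B where B: "pd_op B" "B o\<^sub>L B o\<^sub>L A = id_blinfun" "A o\<^sub>L B o\<^sub>L B = id_blinfun"
    and comm: "\<forall>X. X o\<^sub>L A = A o\<^sub>L X \<longrightarrow> X o\<^sub>L B = B o\<^sub>L X"
    using inv_sqrt_construct[OF sa lb l] by blast
  have "\<exists>!B. pd_op B \<and> B o\<^sub>L B o\<^sub>L A = id_blinfun \<and> A o\<^sub>L B o\<^sub>L B = id_blinfun"
  proof (rule ex1I[of _ B])
    show "pd_op B \<and> B o\<^sub>L B o\<^sub>L A = id_blinfun \<and> A o\<^sub>L B o\<^sub>L B = id_blinfun" using B by blast
  next
    fix B' assume "pd_op B' \<and> B' o\<^sub>L B' o\<^sub>L A = id_blinfun \<and> A o\<^sub>L B' o\<^sub>L B' = id_blinfun"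
    then show "B' = B" using inv_sqrt_unique[OF B comm] by blast
  qed
  then show ?thesis unfolding inv_sqrt_op_def by (rule theI')
qed

lemma inv_sqrt_lower:
  fixes A :: "'h::{real_inner, complete_space} \<Rightarrow>\<^sub>L 'h"
  assumes sa: "self_adjoint_op A" and lb: "\<And>x. l * (norm x)\<^sup>2 \<le> A x \<bullet> x" and l: "l > 0"
  shows "(norm y)\<^sup>2 \<le> norm A * (norm (inv_sqrt_op A y))\<^sup>2"
proof -
  define B where "B = inv_sqrt_op A"
  have P: "pd_op B" "A o\<^sub>L B o\<^sub>L B = id_blinfun"
    using inv_sqrt_op_props[OF sa lb l] by (auto simp: B_def)
  define w where "w = B (B y)"
  have Aw: "A w = y" using comp_apply_eq[OF P(2)] by (simp add: w_def)
  have posA: "0 \<le> A x \<bullet> x" for x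
    using lb[of x] l by (metis mult_nonneg_nonneg less_imp_le zero_le_power2 order_trans)
  show ?thesis
  proof (cases "norm A = 0")
    case True
    then have "A = 0" by simp
    then have "y = 0" using Aw by simp
    then show ?thesis by simp
  next
    case False
    then have nA: "norm A > 0" by simp
    have bd: "A (A w) \<bullet> A w \<le> norm A * (norm (A w))\<^sup>2"
    proof -
      have "A (A w) \<bullet> A w \<le> norm (A (A w)) * norm (A w)" by (rule norm_cauchy_schwarz)
      also have "\<dots> \<le> (norm A * norm (A w)) * norm (A w)" by (intro mult_right_mono norm_blinfun) auto
      finally show ?thesis by (simp add: power2_eq_square mult.assoc)
    qed
    have "(norm (A w))\<^sup>2 \<le> norm A * (A w \<bullet> w)"
      by (rule key_ineq[OF sa posA nA bd])
    also have "A w \<bullet> w = y \<bullet> w" by (simp only: Aw)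
    also have "y \<bullet> w = B y \<bullet> B y"
      using P(1) by (simp add: w_def pd_op_def sa_apply)
    finally show ?thesis by (simp add: Aw B_def power2_norm_eq_inner)
  qed
qed

lemma g_two_points:
  fixes g :: "real \<Rightarrow> real"
  assumes nc: "\<exists>s\<in>{0..1}. \<exists>t\<in>{0..1}. g s \<noteq> g t" and pc: "piecewise_continuous_01 g"
  shows "\<exists>a b. a \<in> {0<..<1} \<and> b \<in> {0<..<1} \<and> isCont g a \<and> isCont g b \<and> g a \<noteq> g b"
proof (rule ccontr)
  assume H: "\<not> ?thesis"
  obtain Is where Is: "finite Is" "disjoint Is" "\<Union>Is = {0..1}"
    "\<And>I. I\<in>Is \<Longrightarrow> is_interval I \<and> interior I \<noteq> {} \<and> continuous_on I g"
    using pc unfolding piecewise_continuous_01_def by blast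
  have U: "u \<in> {0<..<1} \<and> isCont g u" if "I \<in> Is" "u \<in> interior I" for I u
  proof -
    have "I \<subseteq> {0..1}" using Is(3) that(1) by blast
    then have "interior I \<subseteq> interior {0..1}" by (rule interior_mono)
    then have "interior I \<subseteq> {0<..<1}" by simp
    moreover have "isCont g u" using continuous_on_interior[of I g u] Is(4)[OF that(1)] that(2) by blast
    ultimately show ?thesis using that by blast
  qed
  have "(0::real) \<in> \<Union>Is" using Is(3) by simp
  then obtain I0 where I0: "I0 \<in> Is" by blast
  obtain u0 where u0: "u0 \<in> interior I0" using Is(4)[OF I0] by blast
  define c where "c = g u0"
  have const_int: "g u = c" if "I \<in> Is" "u \<in> interior I" for I u
  proof (rule ccontr)
    assume "g u \<noteq> c"
    then have "\<exists>a b. a \<in> {0<..<1} \<and> b \<in> {0<..<1} \<and> isCont g a \<and> isCont g b \<and> g a \<noteq> g b"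
      using U[OF that] U[OF I0 u0] unfolding c_def by (intro exI[of _ u] exI[of _ u0]) simp
    with H show False by blast
  qed
  have "g t = c" if t: "t \<in> {0..1}" for t
  proof -
    obtain I where I: "I \<in> Is" "t \<in> I" using t Is(3) by blast
    have conv: "convex I" using Is(4)[OF I(1)] by (simp add: is_interval_convex)
    show ?thesis
    proof (cases "t \<in> interior I")
      case True then show ?thesis using const_int I(1) by blast
    next
      case False
      have "closure (interior I) = closure I"
        by (rule convex_closure_interior[OF conv]) (use Is(4)[OF I(1)] in simp)
      then have "t \<in> closure (interior I)" using I(2) closure_subset by (metis subsetD)
      then have lp: "t islimpt interior I" using False by (simp add: closure_def)
      then have nb: "at t within interior I \<noteq> bot" by (simp add: trivial_limit_within)
      have "(g \<longlongrightarrow> g t) (at t within I)" using Is(4)[OF I(1)] I(2) by (simp add: continuous_on_def)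
      then have 1: "(g \<longlongrightarrow> g t) (at t within interior I)"
        by (rule tendsto_within_subset) (rule interior_subset)
      have "eventually (\<lambda>x. c = g x) (at t within interior I)"
        using const_int[OF I(1)] by (auto simp: eventually_at_filter)
      then have "((\<lambda>x. c) \<longlongrightarrow> c) (at t within interior I) = (g \<longlongrightarrow> c) (at t within interior I)"
        by (rule tendsto_cong)
      then have 2: "(g \<longlongrightarrow> c) (at t within interior I)" by simp
      show ?thesis using tendsto_unique[OF nb 1 2] .
    qed
  qed
  then show False using nc by auto
qed

lemma window_sum:
  fixes g :: "real \<Rightarrow> real"
  assumes "\<And>i. i \<in> {k<..k+m} \<Longrightarrow> \<bar>g (real i / real n) - g a\<bar> \<le> e"
  shows "\<bar>(\<Sum>i\<in>{k<..k+m}. g (real i / real n)) - real m * g a\<bar> \<le> real m * e"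
proof -
  have "(\<Sum>i\<in>{k<..k+m}. g (real i / real n)) - real m * g a = (\<Sum>i\<in>{k<..k+m}. g (real i / real n) - g a)"
    by (simp add: sum_subtractf)
  also have "\<bar>\<dots>\<bar> \<le> (\<Sum>i\<in>{k<..k+m}. \<bar>g (real i / real n) - g a\<bar>)" by (rule sum_abs)
  also have "\<dots> \<le> (\<Sum>i\<in>{k<..k+m}. e)" by (rule sum_mono) (rule assms)
  also have "\<dots> = real m * e" by simp
  finally show ?thesis .
qed

lemma g_windows:
  fixes g :: "real \<Rightarrow> real"
  assumes a: "a \<in> {0<..<1}" "isCont g a" and b: "b \<in> {0<..<1}" "isCont g b" and ne: "g a \<noteq> g b"
  shows "\<exists>w>0. \<exists>N. \<forall>n\<ge>N. \<exists>ka kb m. w * real n \<le> real m \<and> ka + m < n \<and> kb + m < n \<and>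
            real m * \<bar>g a - g b\<bar> / 2 \<le>
              \<bar>(\<Sum>i\<in>{ka<..ka+m}. g (real i / real n)) - (\<Sum>i\<in>{kb<..kb+m}. g (real i / real n))\<bar>"
proof -
  define d where "d = \<bar>g a - g b\<bar>"
  have d: "d > 0" using ne by (simp add: d_def)
  obtain ra where ra: "ra > 0" "\<And>x. dist x a < ra \<Longrightarrow> dist (g x) (g a) < d/4"
    using a(2) d unfolding continuous_at_eps_delta by (metis zero_less_divide_iff zero_less_numeral)
  obtain rb where rb: "rb > 0" "\<And>x. dist x b < rb \<Longrightarrow> dist (g x) (g b) < d/4"
    using b(2) d unfolding continuous_at_eps_delta by (metis zero_less_divide_iff zero_less_numeral)
  define r where "r = min (min ra rb) (min ((1-a)/2) ((1-b)/2))"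
  have r0: "r > 0" using ra rb a b by (auto simp: r_def)
  have r: "r > 0" "r \<le> ra" "r \<le> rb" "r \<le> (1-a)/2" "r \<le> (1-b)/2"
    using r0 unfolding r_def by (simp_all only: min_le_iff_disj order_refl simp_thms)
  define w' where "w' = r/2"
  define N where "N = nat \<lceil>2/w'\<rceil> + 1"
  have side: "\<exists>k. k + nat \<lfloor>w' * real n\<rfloor> < n \<and>
      \<bar>(\<Sum>i\<in>{k<..k+nat \<lfloor>w' * real n\<rfloor>}. g (real i / real n)) - real (nat \<lfloor>w' * real n\<rfloor>) * g c\<bar>
        \<le> real (nat \<lfloor>w' * real n\<rfloor>) * (d/4)"
    if n: "n \<ge> N" and c: "c \<in> {0<..<1}" "r \<le> (1-c)/2"
      and rc: "\<And>x. dist x c < r \<Longrightarrow> dist (g x) (g c) < d/4" for n c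
  proof -
    define m where "m = nat \<lfloor>w' * real n\<rfloor>"
    define k where "k = nat \<lfloor>c * real n\<rfloor>"
    have npos: "real n > 0" using n by (simp add: N_def)
    have "0 \<le> w' * real n" using r npos by (simp add: w'_def)
    then have "real m = of_int \<lfloor>w' * real n\<rfloor>" by (simp add: m_def)
    then have m_le: "real m \<le> w' * real n" by (simp add: of_int_floor_le)
    have k_le: "real k \<le> c * real n" using c npos by (simp add: k_def)
    have k_gt: "c * real n < real k + 1" using c npos by (simp add: k_def)
    have "real (k + m) \<le> (c + w') * real n" using m_le k_le by (simp add: algebra_simps)
    also have "\<dots> < real n" using c r npos by (simp add: w'_def mult_less_cancel_right2)
    finally have km: "k + m < n" by simp
    have "\<bar>g (real i / real n) - g c\<bar> \<le> d/4" if i: "i \<in> {k<..k+m}" for i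
    proof -
      have "c * real n < real i" using i k_gt by auto
      then have 1: "c < real i / real n" using npos by (simp add: field_simps)
      have "real i \<le> real (k+m)" using i by simp
      also have "\<dots> \<le> (c + w') * real n" using m_le k_le by (simp add: algebra_simps)
      finally have 2: "real i / real n \<le> c + w'" using npos by (simp add: field_simps)
      have "dist (real i / real n) c < r" using 1 2 r by (simp add: dist_real_def w'_def)
      then have "dist (g (real i / real n)) (g c) < d/4" by (rule rc)
      then show ?thesis by (simp add: dist_real_def)
    qed
    then have "\<bar>(\<Sum>i\<in>{k<..k+m}. g (real i / real n)) - real m * g c\<bar> \<le> real m * (d/4)"
      by (rule window_sum)
    then show ?thesis using km unfolding m_def by blast
  qed
  show ?thesis
  proof (rule exI[of _ "w'/2"], rule conjI)
    show "w'/2 > 0" using r by (simp add: w'_def)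
  next
    show "\<exists>N. \<forall>n\<ge>N. \<exists>ka kb m. w'/2 * real n \<le> real m \<and> ka + m < n \<and> kb + m < n \<and>
            real m * \<bar>g a - g b\<bar> / 2 \<le>
              \<bar>(\<Sum>i\<in>{ka<..ka+m}. g (real i / real n)) - (\<Sum>i\<in>{kb<..kb+m}. g (real i / real n))\<bar>"
  proof (rule exI[of _ N], intro allI impI)
    fix n assume n: "N \<le> n"
    define m where "m = nat \<lfloor>w' * real n\<rfloor>"
    obtain ka where ka: "ka + m < n" "\<bar>(\<Sum>i\<in>{ka<..ka+m}. g (real i / real n)) - real m * g a\<bar> \<le> real m * (d/4)"
      using side[OF n a(1) r(4)] ra(2) r(2) unfolding m_def by (meson less_le_trans)
    obtain kb where kb: "kb + m < n" "\<bar>(\<Sum>i\<in>{kb<..kb+m}. g (real i / real n)) - real m * g b\<bar> \<le> real m * (d/4)"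
      using side[OF n b(1) r(5)] rb(2) r(3) unfolding m_def by (meson less_le_trans)
    have "2 / w' \<le> real (nat \<lceil>2/w'\<rceil>)" by (rule real_nat_ceiling_ge)
    moreover have "real (nat \<lceil>2/w'\<rceil>) < real n" using n unfolding N_def by simp
    ultimately have "2 / w' < real n" by linarith
    then have "2 < w' * real n" using r by (simp add: w'_def field_simps)
    moreover have "0 \<le> w' * real n" using r by (simp add: w'_def)
    then have "real m = of_int \<lfloor>w' * real n\<rfloor>" by (simp add: m_def)
    moreover have "w' * real n - 1 < of_int \<lfloor>w' * real n\<rfloor>" by (rule real_of_int_floor_gt_diff_one)
    ultimately have F1: "w'/2 * real n \<le> real m" by linarith
    have F2: "real m * d / 2 \<le> \<bar>(\<Sum>i\<in>{ka<..ka+m}. g (real i / real n)) - (\<Sum>i\<in>{kb<..kb+m}. g (real i / real n))\<bar>"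
    proof -
      have "real m * d = \<bar>real m * g a - real m * g b\<bar>" by (simp add: d_def abs_mult right_diff_distrib[symmetric])
      then show ?thesis using ka(2) kb(2) by linarith
    qed
    show "\<exists>ka kb m. w'/2 * real n \<le> real m \<and> ka + m < n \<and> kb + m < n \<and>
            real m * \<bar>g a - g b\<bar> / 2 \<le>
              \<bar>(\<Sum>i\<in>{ka<..ka+m}. g (real i / real n)) - (\<Sum>i\<in>{kb<..kb+m}. g (real i / real n))\<bar>"
      by (rule exI[of _ ka], rule exI[of _ kb], rule exI[of _ m], intro conjI F1 ka(1) kb(1))
         (use F2 in \<open>simp add: d_def\<close>)
  qed
  qed
qed

lemma cadlag_local_bound:
  fixes x :: "real \<Rightarrow> 'h::real_normed_vector"
  assumes cx: "cadlag x" and t: "t \<in> {0..1}"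
  shows "\<exists>d>0. \<exists>B. \<forall>s\<in>{0..1}. dist s t < d \<longrightarrow> norm (x s) \<le> B"
proof -
  obtain d1 B1 where d1: "d1 > 0" "\<And>s. s \<in> {0..1} \<Longrightarrow> t < s \<Longrightarrow> s < t + d1 \<Longrightarrow> norm (x s) \<le> B1"
  proof (cases "t < 1")
    case True
    then have "continuous (at_right t) x" using cx t by (auto simp: cadlag_def)
    then have "(x \<longlongrightarrow> x t) (at_right t)" by (simp add: continuous_within)
    then have "eventually (\<lambda>s. dist (x s) (x t) < 1) (at_right t)" by (simp add: tendsto_iff)
    then obtain b where b: "b > t" "\<And>s. s > t \<Longrightarrow> s < b \<Longrightarrow> dist (x s) (x t) < 1"
      unfolding eventually_at_right_field by blast
    have "norm (x s) \<le> norm (x t) + 1" if "t < s" "s < t + (b - t)" for s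
    proof -
      have "dist (x s) (x t) < 1" using b that by simp
      then show ?thesis using norm_triangle_ineq2[of "x s" "x t"] by (simp add: dist_norm)
    qed
    then show ?thesis using that[of "b - t" "norm (x t) + 1"] b(1) by auto
  next
    case False
    then show ?thesis using that[of 1 0] by auto
  qed
  obtain d2 B2 where d2: "d2 > 0" "\<And>s. s \<in> {0..1} \<Longrightarrow> t - d2 < s \<Longrightarrow> s < t \<Longrightarrow> norm (x s) \<le> B2"
  proof (cases "0 < t")
    case True
    then have "t \<in> {0<..1}" using t by simp
    then have "\<exists>l. (x \<longlongrightarrow> l) (at_left t)" using cx unfolding cadlag_def by blast
    then obtain l where "(x \<longlongrightarrow> l) (at_left t)" by blast
    then have "eventually (\<lambda>s. dist (x s) l < 1) (at_left t)" by (simp add: tendsto_iff)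
    then obtain b where b: "b < t" "\<And>s. s > b \<Longrightarrow> s < t \<Longrightarrow> dist (x s) l < 1"
      unfolding eventually_at_left_field by blast
    have "norm (x s) \<le> norm l + 1" if "t - (t - b) < s" "s < t" for s
    proof -
      have "dist (x s) l < 1" using b that by simp
      then show ?thesis using norm_triangle_ineq2[of "x s" l] by (simp add: dist_norm)
    qed
    then show ?thesis using that[of "t - b" "norm l + 1"] b(1) by auto
  next
    case False
    then show ?thesis using that[of 1 0] t by auto
  qed
  show ?thesis
  proof (rule exI[of _ "min d1 d2"], rule conjI)
    show "min d1 d2 > 0" using d1 d2 by simp
  next
    show "\<exists>B. \<forall>s\<in>{0..1}. dist s t < min d1 d2 \<longrightarrow> norm (x s) \<le> B"
    proof (rule exI[of _ "max (max B1 B2) (norm (x t))"], intro ballI impI)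
    fix s assume s: "s \<in> {0..1}" "dist s t < min d1 d2"
    consider "s < t" | "s = t" | "t < s" by linarith
    then show "norm (x s) \<le> max (max B1 B2) (norm (x t))"
    proof cases
      case 1
      then have "t - d2 < s" using s by (simp add: dist_real_def)
      then show ?thesis using d2(2)[OF s(1) _ 1] by simp
    next
      case 2 then show ?thesis by simp
    next
      case 3
      then have "s < t + d1" using s by (simp add: dist_real_def)
      then show ?thesis using d1(2)[OF s(1) 3] by simp
    qed
  qed
  qed
qed

lemma cadlag_bounded:
  fixes x :: "real \<Rightarrow> 'h::real_normed_vector"
  assumes cx: "cadlag x"
  shows "\<exists>B. \<forall>t\<in>{0..1}. norm (x t) \<le> B"
proof -
  have "\<forall>t\<in>{0..1}. \<exists>p. fst p > 0 \<and> (\<forall>s\<in>{0..1}. dist s t < fst p \<longrightarrow> norm (x s) \<le> snd p)"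
    using cadlag_local_bound[OF cx] by fastforce
  then obtain P where P: "\<And>t. t \<in> {0..1} \<Longrightarrow> fst (P t) > 0 \<and> (\<forall>s\<in>{0..1}. dist s t < fst (P t) \<longrightarrow> norm (x s) \<le> snd (P t))"
    by metis
  have cov: "{0..1::real} \<subseteq> (\<Union>c\<in>{0..1}. ball c (fst (P c)))"
    using P by force
  obtain C where C: "C \<subseteq> {0..1}" "finite C" "{0..1::real} \<subseteq> (\<Union>c\<in>C. ball c (fst (P c)))"
    by (rule compactE_image[OF compact_Icc _ cov]) auto
  have "C \<noteq> {}" using C(3) by auto
  show ?thesis
  proof (intro exI[of _ "Max ((\<lambda>c. snd (P c)) ` C)"] ballI)
    fix s :: real assume s: "s \<in> {0..1}"
    then obtain c where c: "c \<in> C" "s \<in> ball c (fst (P c))" using C(3) by blast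
    then have "dist s c < fst (P c)" by (simp add: dist_commute)
    then have "norm (x s) \<le> snd (P c)" using P[of c] c(1) C(1) s by blast
    also have "\<dots> \<le> Max ((\<lambda>c. snd (P c)) ` C)" using C(2) c(1) by (intro Max_ge) auto
    finally show "norm (x s) \<le> Max ((\<lambda>c. snd (P c)) ` C)" .
  qed
qed

definition supn :: "(real \<Rightarrow> 'h::real_normed_vector) \<Rightarrow> real" where
  "supn x = (SUP t\<in>{0..1}. norm (x t))"

lemma supn_ge:
  assumes "\<forall>t\<in>{0..1}. norm (x t) \<le> B" "t \<in> {0..1}"
  shows "norm (x t) \<le> supn x"
  unfolding supn_def using assms by (intro cSUP_upper) (auto intro: bdd_aboveI2)

lemma supn_le:
  assumes "\<And>t. t \<in> {0..1} \<Longrightarrow> norm (x t) \<le> C"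
  shows "supn x \<le> C"
  unfolding supn_def using assms by (intro cSUP_least) auto

lemma id_time_change: "(\<lambda>t. t) \<in> time_changes"
  unfolding time_changes_def by (auto intro: strict_mono_onI continuous_on_id)

lemma supn_lip:
  fixes x y :: "real \<Rightarrow> 'h::real_normed_vector"
  assumes cx: "cadlag x" and cy: "cadlag y"
  shows "\<bar>supn x - supn y\<bar> \<le> skorokhod_dist x y"
  unfolding skorokhod_dist_def
proof (rule cINF_greatest)
  show "time_changes \<noteq> {}" using id_time_change by blast
next
  fix \<tau> assume "\<tau> \<in> time_changes"
  then have tm: "strict_mono_on {0..1} \<tau>" "continuous_on {0..1} \<tau>" "\<tau> 0 = 0" "\<tau> 1 = 1"
    by (auto simp: time_changes_def)
  have rng: "\<tau> t \<in> {0..1}" if "t \<in> {0..1}" for t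
    using strict_mono_on_leD[OF tm(1), of 0 t] strict_mono_on_leD[OF tm(1), of t 1] that tm(3,4) by auto
  obtain Bx where Bx: "\<forall>t\<in>{0..1}. norm (x t) \<le> Bx" using cadlag_bounded[OF cx] by blast
  obtain By where By: "\<forall>t\<in>{0..1}. norm (y t) \<le> By" using cadlag_bounded[OF cy] by blast
  define M2 where "M2 = (SUP t\<in>{0..1}. norm (x t - y (\<tau> t)))"
  have D: "norm (x t - y (\<tau> t)) \<le> M2" if "t \<in> {0..1}" for t
    unfolding M2_def
  proof (rule cSUP_upper[OF that])
    show "bdd_above ((\<lambda>t. norm (x t - y (\<tau> t))) ` {0..1})"
    proof (rule bdd_aboveI2)
      fix t :: real assume "t \<in> {0..1}"
      then have "norm (x t) \<le> Bx" "norm (y (\<tau> t)) \<le> By" using Bx By rng by auto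
      then show "norm (x t - y (\<tau> t)) \<le> Bx + By" using norm_triangle_ineq4[of "x t" "y (\<tau> t)"] by linarith
    qed
  qed
  have 1: "supn x \<le> supn y + M2"
  proof (rule supn_le)
    fix t :: real assume t: "t \<in> {0..1}"
    have "norm (x t) \<le> norm (y (\<tau> t)) + norm (x t - y (\<tau> t))"
      using norm_triangle_ineq[of "y (\<tau> t)" "x t - y (\<tau> t)"] by simp
    also have "\<dots> \<le> supn y + M2" using supn_ge[OF By rng[OF t]] D[OF t] by linarith
    finally show "norm (x t) \<le> supn y + M2" .
  qed
  have 2: "supn y \<le> supn x + M2"
  proof (rule supn_le)
    fix s :: real assume s: "s \<in> {0..1}"
    obtain t where t: "0 \<le> t" "t \<le> 1" "\<tau> t = s"
      using IVT'[of \<tau> 0 s 1] tm s by auto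
    have "norm (y s) \<le> norm (x t) + norm (x t - y (\<tau> t))"
      using norm_triangle_ineq4[of "x t" "x t - y (\<tau> t)"] t(3) by simp
    also have "\<dots> \<le> supn x + M2" using supn_ge[OF Bx, of t] D[of t] t by force
    finally show "norm (y s) \<le> supn x + M2" .
  qed
  have "\<bar>supn x - supn y\<bar> \<le> M2" using 1 2 by linarith
  then show "\<bar>supn x - supn y\<bar> \<le> max (SUP t\<in>{0..1}. \<bar>\<tau> t - t\<bar>) (SUP t\<in>{0..1}. norm (x t - y (\<tau> t)))"
    unfolding M2_def by linarith
qed

definition fL :: "real \<Rightarrow> (real \<Rightarrow> 'h::real_normed_vector) \<Rightarrow> real" where
  "fL L x = min 1 (max 0 (supn x - L))"

lemma clamp_lip: "\<bar>min 1 (max 0 a) - min 1 (max 0 b)\<bar> \<le> \<bar>a - b\<bar>" for a b :: real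
  by (simp add: min_def max_def abs_if)

lemma fL_bc: "bounded_continuous_on_D (fL L :: (real \<Rightarrow> 'h::real_normed_vector) \<Rightarrow> real)"
  unfolding bounded_continuous_on_D_def
proof (intro conjI)
  show "\<exists>B. \<forall>x :: real \<Rightarrow> 'h. cadlag x \<longrightarrow> \<bar>fL L x\<bar> \<le> B"
    by (intro exI[of _ 1]) (simp add: fL_def)
  show "\<forall>x :: real \<Rightarrow> 'h. cadlag x \<longrightarrow> (\<forall>e>0. \<exists>d>0. \<forall>y. cadlag y \<longrightarrow> skorokhod_dist x y < d \<longrightarrow> \<bar>fL L x - fL L y\<bar> < e)"
  proof (intro allI impI exI conjI)
    fix x y :: "real \<Rightarrow> 'h" and e :: real
    assume "cadlag x" "0 < e" "cadlag y" "skorokhod_dist x y < e"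
    then show "\<bar>fL L x - fL L y\<bar> < e"
      using clamp_lip[of "supn x - L" "supn y - L"] supn_lip[of x y] unfolding fL_def by linarith
  qed auto
qed

lemma Sn_supn:
  fixes \<epsilon> :: "int \<Rightarrow> 'a \<Rightarrow> 'h::real_normed_vector"
  assumes n: "n > 0"
  shows "supn (\<lambda>t. (1 / sqrt (real n)) *\<^sub>R (\<Sum>i=1..nat \<lfloor>t * real n\<rfloor>. \<epsilon> (int i) \<omega>))
       = Max ((\<lambda>k. norm (\<Sum>i=1..k. \<epsilon> (int i) \<omega>) / sqrt (real n)) ` {..n})"
proof -
  define F where "F k = norm (\<Sum>i=1..k. \<epsilon> (int i) \<omega>) / sqrt (real n)" for k
  have im: "(\<lambda>t. norm ((1 / sqrt (real n)) *\<^sub>R (\<Sum>i=1..nat \<lfloor>t * real n\<rfloor>. \<epsilon> (int i) \<omega>))) ` {0..1} = F ` {..n}"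
  proof (intro equalityI subsetI)
    fix y assume "y \<in> (\<lambda>t. norm ((1 / sqrt (real n)) *\<^sub>R (\<Sum>i=1..nat \<lfloor>t * real n\<rfloor>. \<epsilon> (int i) \<omega>))) ` {0..1}"
    then obtain t where t: "t \<in> {0..1}" "y = norm ((1 / sqrt (real n)) *\<^sub>R (\<Sum>i=1..nat \<lfloor>t * real n\<rfloor>. \<epsilon> (int i) \<omega>))"
      by blast
    have "t * real n \<le> real n" using t(1) n by (simp add: mult_le_cancel_right1)
    then have "nat \<lfloor>t * real n\<rfloor> \<le> n" by (simp add: nat_le_iff floor_le_iff)
    moreover have "y = F (nat \<lfloor>t * real n\<rfloor>)" using t(2) by (simp add: F_def)
    ultimately show "y \<in> F ` {..n}" by blast
  next
    fix y assume "y \<in> F ` {..n}"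
    then obtain k where k: "k \<le> n" "y = F k" by blast
    have "real k / real n \<in> {0..1}" using k n by simp
    moreover have "nat \<lfloor>(real k / real n) * real n\<rfloor> = k" using n by simp
    ultimately show "y \<in> (\<lambda>t. norm ((1 / sqrt (real n)) *\<^sub>R (\<Sum>i=1..nat \<lfloor>t * real n\<rfloor>. \<epsilon> (int i) \<omega>))) ` {0..1}"
      using k(2) unfolding F_def by (intro image_eqI[of _ _ "real k / real n"]) auto
  qed
  show ?thesis
    unfolding supn_def im F_def[symmetric] by (rule cSup_eq_Max) auto
qed

lemma tightness:
  fixes M :: "'a measure" and \<epsilon> :: "int \<Rightarrow> 'a \<Rightarrow> 'h::{real_inner, polish_space}" and N :: "'w measure"
    and W :: "real \<Rightarrow> 'w \<Rightarrow> 'h"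
  assumes M: "prob_space M" and meas: "\<And>i. \<epsilon> i \<in> borel_measurable M"
    and bm: "brownian_motion N W C"
    and wc: "weak_conv_D M (\<lambda>n \<omega> t. (1 / sqrt (real n)) *\<^sub>R (\<Sum>i=1..nat \<lfloor>t * real n\<rfloor>. \<epsilon> (int i) \<omega>)) N (\<lambda>\<omega> t. W t \<omega>)"
    and eta: "\<eta> > 0"
  shows "\<exists>R>0. \<forall>\<^sub>F n in sequentially.
     measure M {\<omega>\<in>space M. R < Max ((\<lambda>k. norm (\<Sum>i=1..k. \<epsilon> (int i) \<omega>) / sqrt (real n)) ` {..n})} < \<eta>"
proof -
  interpret M: prob_space M by (rule M)
  have N: "prob_space N" and Wm: "\<And>t. W t \<in> borel_measurable N"
    and Wc: "\<And>\<omega>. \<omega> \<in> space N \<Longrightarrow> continuous_on {0..1} (\<lambda>t. W t \<omega>)"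
    using bm by (auto simp: brownian_motion_def)
  interpret N: prob_space N by (rule N)
  define h where "h \<omega> = supn (\<lambda>t. W t \<omega>)" for \<omega>
  define Dset where "Dset = \<rat> \<inter> {0<..<(1::real)}"
  have Dsub: "Dset \<subseteq> {0..1}" by (auto simp: Dset_def)
  have Dne: "Dset \<noteq> {}"
  proof -
    have "(1/2::real) \<in> \<rat>" by simp
    then have "(1/2::real) \<in> Dset" unfolding Dset_def by simp
    then show ?thesis by blast
  qed
  have hbd: "\<exists>B. \<forall>t\<in>{0..1}. norm (W t \<omega>) \<le> B" if "\<omega> \<in> space N" for \<omega>
  proof -
    have "bounded ((\<lambda>t. W t \<omega>) ` {0..1})"
      by (intro compact_imp_bounded compact_continuous_image Wc that compact_Icc)
    then show ?thesis by (auto simp: bounded_iff)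
  qed
  have heq: "h \<omega> = (SUP t\<in>Dset. norm (W t \<omega>))" if \<omega>: "\<omega> \<in> space N" for \<omega>
  proof (rule antisym)
    obtain B where B: "\<forall>t\<in>{0..1}. norm (W t \<omega>) \<le> B" using hbd[OF \<omega>] by blast
    have bddD: "bdd_above ((\<lambda>t. norm (W t \<omega>)) ` Dset)"
      using B Dsub by (intro bdd_aboveI2[of _ _ B]) auto
    define sD where "sD = (SUP t\<in>Dset. norm (W t \<omega>))"
    define Cs where "Cs = {0..1} \<inter> (\<lambda>s. norm (W s \<omega>)) -` {..sD}"
    have clC: "closed Cs" unfolding Cs_def
      by (intro continuous_closed_preimage continuous_on_norm Wc[OF \<omega>] closed_atLeastAtMost closed_atMost)
    have DC: "Dset \<subseteq> Cs" unfolding Cs_def sD_def using Dsub cSUP_upper[OF _ bddD] by auto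
    have "{0<..<1::real} \<inter> closure \<rat> \<subseteq> closure ({0<..<1} \<inter> \<rat>)"
      by (rule open_Int_closure_subset) simp
    then have "{0<..<1::real} \<subseteq> closure Dset" by (simp add: Rats_closure_real Dset_def Int_commute)
    also have "closure Dset \<subseteq> Cs" using DC clC by (rule closure_minimal)
    finally have "closure {0<..<1::real} \<subseteq> Cs" using clC by (rule closure_minimal)
    then have "{0..1} \<subseteq> Cs" by simp
    then show "h \<omega> \<le> sD" unfolding h_def by (intro supn_le) (auto simp: Cs_def)
    show "sD \<le> h \<omega>" unfolding h_def supn_def sD_def
      using B Dsub Dne by (intro cSUP_subset_mono) (auto intro: bdd_aboveI2)
  qed
  have hm: "h \<in> borel_measurable N"
  proof -
    have "(\<lambda>\<omega>. SUP t\<in>Dset. norm (W t \<omega>)) \<in> borel_measurable N"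
    proof (rule borel_measurable_cSUP)
      show "countable Dset" unfolding Dset_def by (rule countable_Int1[OF countable_rat])
      show "(\<lambda>\<omega>. norm (W t \<omega>)) \<in> borel_measurable N" for t using Wm by measurable
      show "bdd_above ((\<lambda>t. norm (W t \<omega>)) ` Dset)" if om: "\<omega> \<in> space N" for \<omega>
      proof -
        obtain B where B: "\<forall>t\<in>{0..1}. norm (W t \<omega>) \<le> B" using hbd[OF om] by blast
        show ?thesis using B Dsub by (intro bdd_aboveI2[of _ _ B]) auto
      qed
    qed
    moreover have "h \<in> borel_measurable N \<longleftrightarrow> (\<lambda>\<omega>. SUP t\<in>Dset. norm (W t \<omega>)) \<in> borel_measurable N"
      by (rule measurable_cong) (rule heq)
    ultimately show ?thesis by simp
  qed
  define s where "s L \<omega> = min 1 (max 0 (h \<omega> - real L))" for L :: nat and \<omega>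
  have "(\<lambda>L. integral\<^sup>L N (s L)) \<longlonglongrightarrow> integral\<^sup>L N (\<lambda>\<omega>. 0::real)"
  proof (rule integral_dominated_convergence[where w="\<lambda>_. 1"])
    show "(\<lambda>\<omega>. 0::real) \<in> borel_measurable N" by simp
    show "s L \<in> borel_measurable N" for L unfolding s_def using hm by measurable
    show "integrable N (\<lambda>_. 1::real)" by simp
    show "AE \<omega> in N. (\<lambda>L. s L \<omega>) \<longlonglongrightarrow> 0"
    proof (rule AE_I2)
      fix \<omega>
      obtain L0 where "h \<omega> \<le> real L0" using real_arch_simple by blast
      then have "eventually (\<lambda>L. s L \<omega> = 0) sequentially"
        unfolding eventually_sequentially s_def by (intro exI[of _ L0]) auto
      then show "(\<lambda>L. s L \<omega>) \<longlonglongrightarrow> 0" by (rule tendsto_eventually)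
    qed
    show "AE \<omega> in N. norm (s L \<omega>) \<le> 1" for L by (simp add: s_def)
  qed
  then have "(\<lambda>L. integral\<^sup>L N (s L)) \<longlonglongrightarrow> 0" by simp
  then have "\<forall>\<^sub>F L in sequentially. integral\<^sup>L N (s L) < \<eta>" using eta by (rule order_tendstoD)
  then obtain L0 where L0: "integral\<^sup>L N (s L0) < \<eta>" by (auto simp: eventually_sequentially)
  have sfl: "s L0 = (\<lambda>\<omega>. fL (real L0) (\<lambda>t. W t \<omega>))"
    by (simp add: s_def fL_def h_def fun_eq_iff)
  define S where "S n \<omega> = (\<lambda>t. (1 / sqrt (real n)) *\<^sub>R (\<Sum>i=1..nat \<lfloor>t * real n\<rfloor>. \<epsilon> (int i) \<omega>))" for n \<omega>
  have lim: "(\<lambda>n. \<integral>\<omega>. fL (real L0) (S n \<omega>) \<partial>M) \<longlonglongrightarrow> integral\<^sup>L N (s L0)"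
    using wc fL_bc[of "real L0"] unfolding weak_conv_D_def sfl S_def by blast
  then have ev: "\<forall>\<^sub>F n in sequentially. (\<integral>\<omega>. fL (real L0) (S n \<omega>) \<partial>M) < \<eta>"
    using L0 by (rule order_tendstoD)
  define Q where "Q n \<omega> = Max ((\<lambda>k. norm (\<Sum>i=1..k. \<epsilon> (int i) \<omega>) / sqrt (real n)) ` {..n})" for n \<omega>
  have [measurable]: "\<epsilon> i \<in> borel_measurable M" for i by (rule meas)
  have Qm[measurable]: "Q n \<in> borel_measurable M" for n
    unfolding Q_def by (intro borel_measurable_Max) auto
  show ?thesis
  proof (intro exI[of _ "real L0 + 1"] conjI)
    show "real L0 + 1 > 0" by simp
    have "\<forall>\<^sub>F n in sequentially. n > 0 \<and> (\<integral>\<omega>. fL (real L0) (S n \<omega>) \<partial>M) < \<eta>"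
      using ev eventually_gt_at_top[of 0] by (simp add: eventually_conj_iff)
    then show "\<forall>\<^sub>F n in sequentially.
       measure M {\<omega>\<in>space M. real L0 + 1 < Max ((\<lambda>k. norm (\<Sum>i=1..k. \<epsilon> (int i) \<omega>) / sqrt (real n)) ` {..n})} < \<eta>"
    proof (rule eventually_mono)
      fix n assume n: "n > 0 \<and> (\<integral>\<omega>. fL (real L0) (S n \<omega>) \<partial>M) < \<eta>"
      define B2 where "B2 = {\<omega>\<in>space M. real L0 + 1 < Q n \<omega>}"
      have B2s: "B2 \<in> sets M" unfolding B2_def by measurable
      have fSQ: "fL (real L0) (S n \<omega>) = min 1 (max 0 (Q n \<omega> - real L0))" for \<omega>
        using Sn_supn[of n \<epsilon> \<omega>] n by (simp add: fL_def S_def Q_def)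
      have int_f: "integrable M (\<lambda>\<omega>. fL (real L0) (S n \<omega>))"
        unfolding fSQ by (intro M.integrable_const_bound[where B=1]) auto
      have int_i: "integrable M (indicator B2 :: 'a \<Rightarrow> real)"
        using B2s by (intro M.integrable_const_bound[where B=1]) (auto simp: indicator_def)
      have "B2 \<inter> space M = B2" by (auto simp: B2_def)
      then have "measure M B2 = (\<integral>\<omega>. indicator B2 \<omega> \<partial>M)" by simp
      also have "\<dots> \<le> (\<integral>\<omega>. fL (real L0) (S n \<omega>) \<partial>M)"
        by (rule integral_mono[OF int_i int_f]) (auto simp: fSQ B2_def indicator_def)
      also have "\<dots> < \<eta>" using n by simp
      finally show "measure M {\<omega>\<in>space M. real L0 + 1 < Max ((\<lambda>k. norm (\<Sum>i=1..k. \<epsilon> (int i) \<omega>) / sqrt (real n)) ` {..n})} < \<eta>"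
        unfolding B2_def Q_def .
    qed
  qed
qed

lemma outer_prob_le:
  assumes "B \<in> sets M" "A \<subseteq> B"
  shows "outer_prob M A \<le> measure M B"
  unfolding outer_prob_def
  by (rule cInf_lower) (use assms in \<open>auto intro!: bdd_belowI[of _ 0]\<close>)

lemma outer_prob_nonneg:
  assumes "A \<subseteq> space M"
  shows "0 \<le> outer_prob M A"
  unfolding outer_prob_def
  by (rule cInf_greatest) (use assms sets.top in \<open>auto\<close>)

lemma T_lower:
  fixes Ch :: "'h::{real_inner, complete_space} \<Rightarrow>\<^sub>L 'h" and X :: "nat \<Rightarrow> 'h"
  assumes psd: "psd_op Ch" and lam: "is_largest_eigenvalue Ch l" and pd: "pd_op (Ch + l *\<^sub>R id_blinfun)"
    and k: "k \<in> {1..<n}"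
  shows "norm ((1 / sqrt (real n)) *\<^sub>R (\<Sum>i=1..k. X i - (1 / real n) *\<^sub>R (\<Sum>i=1..n. X i)))
           \<le> sqrt (2 * norm Ch) * T_WF n X Ch l"
proof -
  define A where "A = Ch + l *\<^sub>R id_blinfun"
  define y where "y = (1 / sqrt (real n)) *\<^sub>R (\<Sum>i=1..k. X i - (1 / real n) *\<^sub>R (\<Sum>i=1..n. X i))"
  obtain x where x: "x \<noteq> 0" "Ch x = l *\<^sub>R x" using lam by (auto simp: is_largest_eigenvalue_def is_eigenvalue_def)
  have "0 \<le> Ch x \<bullet> x" using psd by (simp add: psd_op_def)
  then have "0 \<le> l * (x \<bullet> x)" using x by simp
  moreover have xx: "x \<bullet> x > 0" using x(1) by simp
  ultimately have l0: "0 \<le> l" by (metis mult_neg_pos not_le)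
  have "0 < A x \<bullet> x" using pd x(1) by (simp add: pd_op_def A_def)
  then have "l \<noteq> 0" using x by (auto simp: A_def blinfun.add_left blinfun.scaleR_left)
  with l0 have l: "l > 0" by simp
  have "\<bar>l\<bar> * norm x = norm (Ch x)" using x by simp
  also have "\<dots> \<le> norm Ch * norm x" by (rule norm_blinfun)
  finally have lCh: "l \<le> norm Ch" using x l by simp
  have saA: "self_adjoint_op A" using psd
    by (simp add: A_def self_adjoint_op_def psd_op_def blinfun.add_left blinfun.scaleR_left inner_add_left inner_add_right)
  have lbA: "l * (norm z)\<^sup>2 \<le> A z \<bullet> z" for z
  proof -
    have "0 \<le> Ch z \<bullet> z" using psd by (simp add: psd_op_def)
    then show ?thesis by (simp add: A_def blinfun.add_left blinfun.scaleR_left inner_add_left power2_norm_eq_inner)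
  qed
  have nA: "norm A \<le> 2 * norm Ch"
  proof -
    have "norm A \<le> norm Ch + norm (l *\<^sub>R (id_blinfun :: 'h \<Rightarrow>\<^sub>L 'h))" unfolding A_def by (rule norm_triangle_ineq)
    also have "norm (l *\<^sub>R (id_blinfun :: 'h \<Rightarrow>\<^sub>L 'h)) \<le> l * 1"
      using l norm_blinfun_id_le[where 'a='h] by (simp add: mult_left_mono)
    finally show ?thesis using lCh by simp
  qed
  have "(norm y)\<^sup>2 \<le> norm A * (norm (inv_sqrt_op A y))\<^sup>2" by (rule inv_sqrt_lower[OF saA lbA l])
  also have "\<dots> \<le> (2 * norm Ch) * (norm (inv_sqrt_op A y))\<^sup>2" by (intro mult_right_mono nA) auto
  finally have "sqrt ((norm y)\<^sup>2) \<le> sqrt ((2 * norm Ch) * (norm (inv_sqrt_op A y))\<^sup>2)"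
    by (rule real_sqrt_le_mono)
  then have 1: "norm y \<le> sqrt (2 * norm Ch) * norm (inv_sqrt_op A y)" by (simp add: real_sqrt_mult)
  have "norm (inv_sqrt_op A y) \<le> T_WF n X Ch l"
    unfolding T_WF_def Let_def A_def[symmetric] y_def using k by (intro Max_ge) auto
  then have "sqrt (2 * norm Ch) * norm (inv_sqrt_op A y) \<le> sqrt (2 * norm Ch) * T_WF n X Ch l"
    by (intro mult_left_mono) auto
  with 1 show ?thesis unfolding y_def by linarith
qed

lemma sum_window:
  fixes f :: "nat \<Rightarrow> 'b::comm_monoid_add"
  shows "(\<Sum>i=1..k+m. f i) = (\<Sum>i=1..k. f i) + (\<Sum>i\<in>{k<..k+m}. (f i :: 'b::comm_monoid_add))"
proof -
  have "{1..k+m} = {1..k} \<union> {k<..k+m}" by auto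
  moreover have "{1..k} \<inter> {k<..k+m} = {}" by auto
  ultimately show ?thesis by (simp add: sum.union_disjoint)
qed

lemma window_X:
  fixes X E :: "nat \<Rightarrow> 'h::real_vector"
  assumes "\<And>i. X i = \<mu> + g' i *\<^sub>R \<Delta> + E i"
  shows "(\<Sum>i=1..k+m. X i - Xb) - (\<Sum>i=1..k. X i - Xb)
       = real m *\<^sub>R (\<mu> - Xb) + (\<Sum>i\<in>{k<..k+m}. g' i) *\<^sub>R \<Delta> + ((\<Sum>i=1..k+m. E i) - (\<Sum>i=1..k. E i))"
proof -
  have "(\<Sum>i=1..k+m. X i - Xb) - (\<Sum>i=1..k. X i - Xb) = (\<Sum>i\<in>{k<..k+m}. X i - Xb)"
    unfolding sum_window[of "\<lambda>i. X i - Xb" k m] by simp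
  also have "\<dots> = (\<Sum>i\<in>{k<..k+m}. (\<mu> - Xb) + g' i *\<^sub>R \<Delta> + E i)"
    by (intro sum.cong) (auto simp: assms algebra_simps)
  also have "\<dots> = real m *\<^sub>R (\<mu> - Xb) + (\<Sum>i\<in>{k<..k+m}. g' i) *\<^sub>R \<Delta> + (\<Sum>i\<in>{k<..k+m}. E i)"
    by (simp add: sum.distrib scaleR_sum_left sum_constant_scaleR)
  also have "(\<Sum>i\<in>{k<..k+m}. E i) = (\<Sum>i=1..k+m. E i) - (\<Sum>i=1..k. E i)"
    unfolding sum_window[of E k m] by simp
  finally show ?thesis .
qed

theorem theorem2p2:
  fixes M :: "'a measure"
    and \<epsilon> :: "int \<Rightarrow> 'a \<Rightarrow> 'h::{real_inner, polish_space}"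
    and \<mu> :: 'h and \<Delta> :: "nat \<Rightarrow> 'h" and g :: "real \<Rightarrow> real"
    and X :: "nat \<Rightarrow> nat \<Rightarrow> 'a \<Rightarrow> 'h"
    and Chat :: "nat \<Rightarrow> 'a \<Rightarrow> ('h \<Rightarrow>\<^sub>L 'h)"
    and lam1 :: "nat \<Rightarrow> 'a \<Rightarrow> real"
    and C :: "int \<Rightarrow> ('h \<Rightarrow>\<^sub>L 'h)" and C\<epsilon> :: "'h \<Rightarrow>\<^sub>L 'h"
  assumes M: "prob_space M"
    \<comment> \<open>model\<close>
    and X_def: "\<And>n i \<omega>. X n i \<omega> = \<mu> + g (real i / real n) *\<^sub>R \<Delta> n + \<epsilon> (int i) \<omega>"
    \<comment> \<open>assumptions on g\<close>
    and g_nonconst: "\<exists>s\<in>{0..1}. \<exists>t\<in>{0..1}. g s \<noteq> g t"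
    and g_bounded: "bounded (g ` {0..1})"
    and g_int: "g integrable_on {0..1}"
    and g_pc: "piecewise_continuous_01 g"
    and g0: "g 0 = 0"
    \<comment> \<open>(A1)\<close>
    and eps_meas: "\<And>i. \<epsilon> i \<in> borel_measurable M"
    and eps_centered: "\<And>i. integrable M (\<epsilon> i) \<and> (\<integral>\<omega>. \<epsilon> i \<omega> \<partial>M) = 0"
    and eps_stat: "strictly_stationary M \<epsilon>"
    and eps_moment: "\<exists>k>2. integrable M (\<lambda>\<omega>. norm (\<epsilon> 1 \<omega>) powr k)"
    and C_def: "\<And>r x. blinfun_apply (C r) x = (\<integral>\<omega>. blinfun_apply (tensor (\<epsilon> 0 \<omega>) (\<epsilon> r \<omega>)) x \<partial>M)"
    and C_abs_sum: "(\<lambda>r. norm (C r)) summable_on UNIV"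
    and Ceps_def: "C\<epsilon> = (\<Sum>\<^sub>\<infinity>r. C r)"
    and Ceps_nz: "C\<epsilon> \<noteq> 0"
    and Ceps_eig: "\<exists>(P::nat set) (v::nat \<Rightarrow> 'h) (lam::nat \<Rightarrow> real).
        (P = UNIV \<or> (\<exists>d. P = {1..d})) \<and>
        (\<forall>p\<in>P. norm (v p) = 1) \<and> (\<forall>p\<in>P. \<forall>q\<in>P. p \<noteq> q \<longrightarrow> v p \<bullet> v q = 0) \<and>
        closure (span (v ` P)) = UNIV \<and>
        (\<forall>p\<in>P. \<forall>q\<in>P. p \<le> q \<longrightarrow> lam q \<le> lam p) \<and>
        (\<forall>x. ((\<lambda>p. (lam p * (v p \<bullet> x)) *\<^sub>R v p) has_sum blinfun_apply C\<epsilon> x) P) \<and>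
        ((\<lambda>(p, h). \<bar>cov M (\<lambda>\<omega>. \<epsilon> 0 \<omega> \<bullet> v p) (\<lambda>\<omega>. \<epsilon> h \<omega> \<bullet> v p)\<bar>) summable_on (P \<times> UNIV))"
    \<comment> \<open>(A2)\<close>
    and eps_fclt: "\<exists>(N::'w measure) W. brownian_motion N W C\<epsilon> \<and>
        weak_conv_D M (\<lambda>n \<omega> t. (1 / sqrt (real n)) *\<^sub>R (\<Sum>i=1..nat \<lfloor>t * real n\<rfloor>. \<epsilon> (int i) \<omega>))
                    N (\<lambda>\<omega> t. W t \<omega>)"
    \<comment> \<open>the estimator Chat_n: random bounded self-adjoint psd operator computed from X_1..X_n\<close>
    and Chat_fun: "\<exists>F. \<forall>n \<omega>. Chat n \<omega> = F n (map (\<lambda>i. X n i \<omega>) [1..<n+1])"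
    and Chat_meas: "\<And>n. Chat n \<in> borel_measurable M"
    and Chat_psd: "\<And>n \<omega>. psd_op (Chat n \<omega>)"
    and lam1: "\<And>n \<omega>. is_largest_eigenvalue (Chat n \<omega>) (lam1 n \<omega>)"
    and Chat_pd: "\<And>n \<omega>. pd_op (Chat n \<omega> + lam1 n \<omega> *\<^sub>R id_blinfun)"
    \<comment> \<open>rates\<close>
    and Chat_small: "\<And>e. e > 0 \<Longrightarrow>
        (\<lambda>n. measure M {\<omega>\<in>space M. norm (Chat n \<omega>) > e * (real n * (norm (\<Delta> n))\<^sup>2)}) \<longlonglongrightarrow> 0"
    and Delta_large: "filterlim (\<lambda>n. sqrt (real n) * norm (\<Delta> n)) at_top sequentially"
  shows "\<forall>K::real. (\<lambda>n. outer_prob M {\<omega>\<in>space M. T_WF n (\<lambda>i. X n i \<omega>) (Chat n \<omega>) (lam1 n \<omega>) \<le> K})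
           \<longlonglongrightarrow> 0"
proof (intro allI)
  fix K :: real
  interpret M: prob_space M by (rule M)
  have [measurable]: "\<And>i. \<epsilon> i \<in> borel_measurable M" by (rule eps_meas)
  have [measurable]: "\<And>n. Chat n \<in> borel_measurable M" by (rule Chat_meas)
  obtain a b where ab: "a \<in> {0<..<1}" "b \<in> {0<..<1}" "isCont g a" "isCont g b" "g a \<noteq> g b"
    using g_two_points[OF g_nonconst g_pc] by blast
  obtain w N0 where w: "w > 0" and win: "\<And>n. n \<ge> N0 \<Longrightarrow> \<exists>ka kb m. w * real n \<le> real m \<and> ka + m < n \<and> kb + m < n \<and>
            real m * \<bar>g a - g b\<bar> / 2 \<le>
              \<bar>(\<Sum>i\<in>{ka<..ka+m}. g (real i / real n)) - (\<Sum>i\<in>{kb<..kb+m}. g (real i / real n))\<bar>"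
    using g_windows[OF ab(1,3) ab(2,4) ab(5)] by blast
  define \<delta> where "\<delta> = \<bar>g a - g b\<bar>"
  have \<delta>: "\<delta> > 0" using ab(5) by (simp add: \<delta>_def)
  define c1 where "c1 = w * \<delta> / 8"
  have c1: "c1 > 0" using w \<delta> by (simp add: c1_def)
  obtain NN :: "'w measure" and W where bm: "brownian_motion NN W C\<epsilon>"
    and wc: "weak_conv_D M (\<lambda>n \<omega> t. (1 / sqrt (real n)) *\<^sub>R (\<Sum>i=1..nat \<lfloor>t * real n\<rfloor>. \<epsilon> (int i) \<omega>)) NN (\<lambda>\<omega> t. W t \<omega>)"
    using eps_fclt by blast
  define K' where "K' = max K 1"
  have K': "K \<le> K'" "1 \<le> K'" by (auto simp: K'_def)
  define s0 where "s0 = c1 / (2 * (K' + 1))"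
  have s0: "s0 > 0" using c1 K' by (simp add: s0_def)
  have s0K: "s0 * K' < c1 / 2"
  proof -
    have "s0 * K' = (c1 / 2) * (K' / (K' + 1))" using K' by (simp add: s0_def field_simps)
    also have "\<dots> < (c1 / 2) * 1" using c1 K' by (intro mult_strict_left_mono) auto
    finally show ?thesis by simp
  qed
  define e where "e = s0\<^sup>2 / 2"
  have e: "e > 0" using s0 by (simp add: e_def)
  define op where "op n = outer_prob M {\<omega>\<in>space M. T_WF n (\<lambda>i. X n i \<omega>) (Chat n \<omega>) (lam1 n \<omega>) \<le> K}" for n
  have op0: "0 \<le> op n" for n unfolding op_def by (rule outer_prob_nonneg) auto
  have "op \<longlonglongrightarrow> 0"
    unfolding tendsto_iff
  proof (intro allI impI)
    fix \<eta> :: real assume \<eta>: "\<eta> > 0"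
    obtain R where R: "R > 0" and tR: "\<forall>\<^sub>F n in sequentially.
       measure M {\<omega>\<in>space M. R < Max ((\<lambda>k. norm (\<Sum>i=1..k. \<epsilon> (int i) \<omega>) / sqrt (real n)) ` {..n})} < \<eta>/2"
      using tightness[OF M eps_meas bm wc, of "\<eta>/2"] \<eta> by auto
    have t1: "\<forall>\<^sub>F n in sequentially. measure M {\<omega>\<in>space M. norm (Chat n \<omega>) > e * (real n * (norm (\<Delta> n))\<^sup>2)} < \<eta>/2"
      using Chat_small[OF e] \<eta> by (intro order_tendstoD(2)) auto
    have t3: "\<forall>\<^sub>F n in sequentially. N0 \<le> n"
      by (rule eventually_ge_at_top)
    have t4: "\<forall>\<^sub>F n in sequentially. max (2 * R / c1) 1 \<le> sqrt (real n) * norm (\<Delta> n)"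
      using Delta_large unfolding filterlim_at_top by blast
    have "\<forall>\<^sub>F n in sequentially. op n < \<eta>"
      using t1 tR t3 t4
    proof eventually_elim
      case (elim n)
      define B1 where "B1 = {\<omega>\<in>space M. norm (Chat n \<omega>) > e * (real n * (norm (\<Delta> n))\<^sup>2)}"
      define B2 where "B2 = {\<omega>\<in>space M. R < Max ((\<lambda>k. norm (\<Sum>i=1..k. \<epsilon> (int i) \<omega>) / sqrt (real n)) ` {..n})}"
      have sB1: "B1 \<in> sets M" unfolding B1_def by measurable
      have sB2: "B2 \<in> sets M" unfolding B2_def by measurable
      have incl: "{\<omega>\<in>space M. T_WF n (\<lambda>i. X n i \<omega>) (Chat n \<omega>) (lam1 n \<omega>) \<le> K} \<subseteq> B1 \<union> B2"
      proof
        fix \<omega> assume \<omega>: "\<omega> \<in> {\<omega>\<in>space M. T_WF n (\<lambda>i. X n i \<omega>) (Chat n \<omega>) (lam1 n \<omega>) \<le> K}"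
        show "\<omega> \<in> B1 \<union> B2"
        proof (rule ccontr)
          assume "\<omega> \<notin> B1 \<union> B2"
          then have nb1: "norm (Chat n \<omega>) \<le> e * (real n * (norm (\<Delta> n))\<^sup>2)"
            and nb2: "Max ((\<lambda>k. norm (\<Sum>i=1..k. \<epsilon> (int i) \<omega>) / sqrt (real n)) ` {..n}) \<le> R"
            using \<omega> by (auto simp: B1_def B2_def not_less)
          have TK: "T_WF n (\<lambda>i. X n i \<omega>) (Chat n \<omega>) (lam1 n \<omega>) \<le> K" using \<omega> by simp
          obtain ka kb m where km: "w * real n \<le> real m" "ka + m < n" "kb + m < n"
            "real m * \<bar>g a - g b\<bar> / 2 \<le>
              \<bar>(\<Sum>i\<in>{ka<..ka+m}. g (real i / real n)) - (\<Sum>i\<in>{kb<..kb+m}. g (real i / real n))\<bar>"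
            using win[OF elim(3)] by blast
          define Ga where "Ga = (\<Sum>i\<in>{ka<..ka+m}. g (real i / real n))"
          define Gb where "Gb = (\<Sum>i\<in>{kb<..kb+m}. g (real i / real n))"
          define u where "u = sqrt (real n) * norm (\<Delta> n)"
          have u: "1 \<le> u" "2 * R / c1 \<le> u" using elim(4) by (auto simp: u_def)
          have Ru: "R \<le> c1 * u / 2" using u(2) c1 by (simp add: field_simps)
          have npos: "n > 0" using km(2) by simp
          define sq where "sq = sqrt (real n)"
          have sq: "sq > 0" "sq * sq = real n" using npos by (auto simp: sq_def)
          define Xs where "Xs i = X n i \<omega>" for i
          define Xb where "Xb = (1 / real n) *\<^sub>R (\<Sum>i=1..n. Xs i)"
          define V where "V k = (\<Sum>i=1..k. Xs i - Xb)" for k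
          define P where "P k = (\<Sum>i=1..k. \<epsilon> (int i) \<omega>)" for k
          have Pb: "norm (P k) \<le> R * sq" if k: "k \<le> n" for k
          proof -
            have "norm (P k) / sq \<le> Max ((\<lambda>k. norm (\<Sum>i=1..k. \<epsilon> (int i) \<omega>) / sqrt (real n)) ` {..n})"
              by (rule Max_ge) (use k in \<open>auto simp: P_def sq_def\<close>)
            also have "\<dots> \<le> R" by (rule nb2)
            finally show ?thesis using sq by (simp add: pos_divide_le_eq)
          qed
          have sqCh: "sqrt (2 * norm (Chat n \<omega>)) \<le> s0 * u"
          proof -
            have "2 * norm (Chat n \<omega>) \<le> 2 * (e * (real n * (norm (\<Delta> n))\<^sup>2))" using nb1 by simp
            also have "\<dots> = (s0 * u)\<^sup>2"
              using npos by (simp add: e_def u_def power_mult_distrib)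
            finally have "sqrt (2 * norm (Chat n \<omega>)) \<le> sqrt ((s0 * u)\<^sup>2)" by (rule real_sqrt_le_mono)
            also have "\<dots> = s0 * u" using s0 u by simp
            finally show ?thesis .
          qed
          have Vb: "norm (V k) \<le> sq * (s0 * u * K')" if k: "k < n" for k
          proof (cases "k = 0")
            case True
            then show ?thesis using sq s0 u K' by (simp add: V_def)
          next
            case False
            then have k1: "k \<in> {1..<n}" using k by simp
            have "norm ((1 / sqrt (real n)) *\<^sub>R (\<Sum>i=1..k. X n i \<omega> - (1 / real n) *\<^sub>R (\<Sum>i=1..n. X n i \<omega>)))
                 \<le> sqrt (2 * norm (Chat n \<omega>)) * T_WF n (\<lambda>i. X n i \<omega>) (Chat n \<omega>) (lam1 n \<omega>)"
              by (rule T_lower[OF Chat_psd lam1 Chat_pd k1])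
            then have 1: "norm (V k) / sq \<le> sqrt (2 * norm (Chat n \<omega>)) * T_WF n (\<lambda>i. X n i \<omega>) (Chat n \<omega>) (lam1 n \<omega>)"
              using sq by (simp add: V_def Xs_def Xb_def sq_def)
            also have "\<dots> \<le> sqrt (2 * norm (Chat n \<omega>)) * K'"
              using TK K' by (intro mult_left_mono) auto
            also have "\<dots> \<le> (s0 * u) * K'" using sqCh K' by (intro mult_right_mono) auto
            finally show ?thesis using sq by (simp add: pos_divide_le_eq mult.commute)
          qed
          have Xs_eq: "Xs i = \<mu> + g (real i / real n) *\<^sub>R \<Delta> n + \<epsilon> (int i) \<omega>" for i
            by (simp add: Xs_def X_def)
          have Wa: "V (ka + m) - V ka = real m *\<^sub>R (\<mu> - Xb) + Ga *\<^sub>R \<Delta> n + (P (ka + m) - P ka)"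
            unfolding V_def P_def Ga_def by (rule window_X[OF Xs_eq])
          have Wb: "V (kb + m) - V kb = real m *\<^sub>R (\<mu> - Xb) + Gb *\<^sub>R \<Delta> n + (P (kb + m) - P kb)"
            unfolding V_def P_def Gb_def by (rule window_X[OF Xs_eq])
          define Pd where "Pd = (P (ka + m) - P ka) - (P (kb + m) - P kb)"
          define Vd where "Vd = (V (ka + m) - V ka) - (V (kb + m) - V kb)"
          have VdE: "(Ga - Gb) *\<^sub>R \<Delta> n = Vd - Pd"
            unfolding Vd_def Pd_def Wa Wb by (simp add: algebra_simps)
          have nPd: "norm Pd \<le> 4 * (R * sq)"
          proof -
            have "norm Pd \<le> norm (P (ka + m) - P ka) + norm (P (kb + m) - P kb)"
              unfolding Pd_def by (rule norm_triangle_ineq4)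
            also have "\<dots> \<le> (norm (P (ka + m)) + norm (P ka)) + (norm (P (kb + m)) + norm (P kb))"
              by (intro add_mono norm_triangle_ineq4)
            also have "\<dots> \<le> (R * sq + R * sq) + (R * sq + R * sq)"
              using km(2,3) by (intro add_mono Pb) auto
            finally show ?thesis by linarith
          qed
          have nVd: "norm Vd \<le> 4 * (sq * (s0 * u * K'))"
          proof -
            have "norm Vd \<le> norm (V (ka + m) - V ka) + norm (V (kb + m) - V kb)"
              unfolding Vd_def by (rule norm_triangle_ineq4)
            also have "\<dots> \<le> (norm (V (ka + m)) + norm (V ka)) + (norm (V (kb + m)) + norm (V kb))"
              by (intro add_mono norm_triangle_ineq4)
            also have "\<dots> \<le> (sq * (s0 * u * K') + sq * (s0 * u * K')) + (sq * (s0 * u * K') + sq * (s0 * u * K'))"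
              using km(2,3) by (intro add_mono Vb) auto
            finally show ?thesis by linarith
          qed
          have "\<bar>Ga - Gb\<bar> * norm (\<Delta> n) = norm (Vd - Pd)" by (simp flip: VdE)
          also have "\<dots> \<le> norm Vd + norm Pd" by (rule norm_triangle_ineq4)
          finally have main1: "\<bar>Ga - Gb\<bar> * norm (\<Delta> n) \<le> 4 * (sq * (s0 * u * K')) + 4 * (R * sq)"
            using nVd nPd by linarith
          have "4 * c1 * real n \<le> real m * \<delta> / 2"
            using km(1) \<delta> by (simp add: c1_def mult_right_mono)
          also have "\<dots> \<le> \<bar>Ga - Gb\<bar>" using km(4) by (simp add: \<delta>_def Ga_def Gb_def)
          finally have "4 * c1 * real n * norm (\<Delta> n) \<le> \<bar>Ga - Gb\<bar> * norm (\<Delta> n)"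
            by (intro mult_right_mono) auto
          also have "4 * c1 * real n * norm (\<Delta> n) = sq * (4 * c1 * u)"
            using sq by (simp add: u_def sq_def[symmetric] flip: sq(2))
          finally have "sq * (4 * c1 * u) \<le> sq * (4 * (s0 * u * K') + 4 * R)"
            using main1 by (simp add: algebra_simps)
          then have "4 * c1 * u \<le> 4 * (s0 * u * K') + 4 * R" using sq by simp
          moreover have "s0 * u * K' < c1 / 2 * u"
            using s0K u by (simp add: mult.commute mult.left_commute mult_strict_left_mono)
          ultimately show False using Ru by linarith
        qed
      qed
      have "op n \<le> measure M (B1 \<union> B2)" unfolding op_def
        by (rule outer_prob_le[OF _ incl]) (use sB1 sB2 in auto)
      also have "\<dots> \<le> measure M B1 + measure M B2"
        by (rule measure_Un_le[OF sB1 sB2])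
      also have "\<dots> < \<eta>" using elim by (simp add: B1_def B2_def)
      finally show "op n < \<eta>" .
    qed
    then show "\<forall>\<^sub>F n in sequentially. dist (op n) 0 < \<eta>"
      by (rule eventually_mono) (simp add: op0 abs_of_nonneg)
  qed
  then show "(\<lambda>n. outer_prob M {\<omega>\<in>space M. T_WF n (\<lambda>i. X n i \<omega>) (Chat n \<omega>) (lam1 n \<omega>) \<le> K}) \<longlonglongrightarrow> 0"
    unfolding op_def[abs_def] .
qed

end
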